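(* Let $T>0$, let $U\subseteq\mathbb{R}^k$ be bounded with $0\in U$, let $V\subset\mathbb{R}^n$ be bounded, let $f:[0,T]\times\mathbb{R}^n\times U\to\mathbb{R}^n$ be continuous and continuously differentiable in its second and third arguments, and let $x_0\in\mathbb{R}^n$. Let $\|\cdot\|$ be a norm on $\mathbb{R}^n$ with dual norm $\|\cdot\|_\star$, and $\|\cdot\|_U$ a norm on $\mathbb{R}^k$. Consider the system $\dot x(t)=f(t,x(t),u(t))$, $x(0)=x_0$, and its adjoint $\dot\lambda(t)=-D_xf(t,x(t),u(t))^\top\lambda(t)-v(t)$, with measurable inputs $u:[0,T]\to U$, $v:[0,T]\to V$. Let $X,\Lambda\subset\mathbb{R}^n$ be bounded sets containing all state values $x(t)$ and all costate values $\lambda(t)$, $t\in[0,T]$, of the trajectories considered. Assume: (A1) there is $c>0$ such that for all $t\in[0,T]$ and $\tilde u\in U$, the map $x\mapsto f(t,x,\tilde u)$ has one-sided Lipschitz constant at most $-c$ with respect to $\|\cdot\|$, and the solution with $u\equiv0$ is bounded; (A2) for all $t$ and $\tilde x\in\mathbb{R}^n$, $u\mapsto f(t,\tilde x,u)$ is Lipschitz from $(U,\|\cdot\|_U)$ to $(\mathbb{R}^n,\|\cdot\|)$ with constant $\ell_{f,u}$; (A3) for all $t\in[0,T]$, $\tilde x\in X$, $\tilde u\in U$, $\tilde\lambda\in\Lambda$, the map $x\mapsto D_xf(t,x,\tilde u)^\top\tilde\lambda$ is Lipschitz from $(\mathbb{R}^n,\|\cdot\|)$ to $(\mathbb{R}^n,\|\cdot\|_\star)$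 with constant $\ell_{f_x,x}$, and $u\mapsto D_xf(t,\tilde x,u)^\top\tilde\lambda$ is Lipschitz from $(U,\|\cdot\|_U)$ to $(\mathbb{R}^n,\|\cdot\|_\star)$ with constant $\ell_{f_x,u}$. Let $u,\bar u:[0,T]\to U$ and $v,\bar v:[0,T]\to V$ be measurable, let $x,\bar x$ be the state trajectories (both from $x_0$) driven by $u,\bar u$, and let $\lambda,\bar\lambda$ be the adjoint trajectories driven by $(x,u,v)$ and $(\bar x,\bar u,\bar v)$ respectively. With $\kappa=c^{-1}(1-e^{-cT})$, \begin{align*} \sup_{t\in[0,T]}\|\lambda(t)-\bar\lambda(t)\|_\star &\le \|\lambda(T)-\bar\lambda(T)\|_\star + \kappa\sup_{t\in[0,T]}\|v(t)-\bar v(t)\|_\star \\ &\quad + (\ell_{f_x,u}\kappa+\ell_{f_x,x}\ell_{f,u}\kappa^2)\sup_{t\in[0,T]}\|u(t)-\bar u(t)\|_U . \end{align*}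
   Context: The dual norm is $\|z\|_\star=\sup_{\|y\|\le1}y^\top z$. For a matrix $A$, the induced norm is $\|A\|=\sup_{\|x\|=1}\|Ax\|$ and the logarithmic norm is $\mu(A)=\lim_{h\to0^+}(\|I_n+hA\|-1)/h$. For continuously differentiable $F:\mathbb{R}^n\to\mathbb{R}^n$, its one-sided Lipschitz constant with respect to $\|\cdot\|$ is $\sup_{x}\mu(DF(x))$. Solutions are assumed to exist on $[0,T]$. *)

theory Defs
  imports "HOL-Analysis.Analysis"
begin

definition is_norm :: "('a::real_vector \<Rightarrow> real) \<Rightarrow> bool" where
  "is_norm N \<longleftrightarrow> (\<forall>x. 0 \<le> N x) \<and> (\<forall>x. N x = 0 \<longleftrightarrow> x = 0)
     \<and> (\<forall>a x. N (a *\<^sub>R x) = \<bar>a\<bar> * N x) \<and> (\<forall>x y. N (x + y) \<le> N x + N y)"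

definition dual_norm :: "(real^'n \<Rightarrow> real) \<Rightarrow> real^'n \<Rightarrow> real" where
  "dual_norm N z = Sup {y \<bullet> z | y. N y \<le> 1}"

definition induced_norm :: "(real^'n \<Rightarrow> real) \<Rightarrow> real^'n^'n \<Rightarrow> real" where
  "induced_norm N A = Sup {N (A *v x) | x. N x = 1}"

definition log_norm :: "(real^'n \<Rightarrow> real) \<Rightarrow> real^'n^'n \<Rightarrow> real" where
  "log_norm N A = Lim (at_right 0) (\<lambda>h. (induced_norm N (mat 1 + h *\<^sub>R A) - 1) / h)"

text \<open>One-sided Lipschitz constant of a C^1 map with Jacobian DF (extended-real supremum).\<close>
definition osl_const :: "(real^'n \<Rightarrow> real) \<Rightarrow> (real^'n \<Rightarrow> real^'n^'n) \<Rightarrow> ereal" where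
  "osl_const N DF = (SUP x. ereal (log_norm N (DF x)))"

text \<open>Caratheodory (integral) solution of x' = f(t,x,u), x(0)=x0 on [0,T].\<close>
definition state_sol :: "real \<Rightarrow> (real \<Rightarrow> real^'n \<Rightarrow> real^'k \<Rightarrow> real^'n) \<Rightarrow> real^'n
    \<Rightarrow> (real \<Rightarrow> real^'k) \<Rightarrow> (real \<Rightarrow> real^'n) \<Rightarrow> bool" where
  "state_sol T f x0 u x \<longleftrightarrow>
     (\<forall>t\<in>{0..T}. ((\<lambda>s. f s (x s) (u s)) has_integral (x t - x0)) {0..t})"

definition adjoint_sol :: "real \<Rightarrow> (real \<Rightarrow> real^'n \<Rightarrow> real^'k \<Rightarrow> real^'n^'n)
    \<Rightarrow> (real \<Rightarrow> real^'n) \<Rightarrow> (real \<Rightarrow> real^'k) \<Rightarrow> (real \<Rightarrow> real^'n) \<Rightarrow> (real \<Rightarrow> real^'n) \<Rightarrow> bool" where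
  "adjoint_sol T Dx x u v lam \<longleftrightarrow>
     (\<forall>t\<in>{0..T}. ((\<lambda>s. - (transpose (Dx s (x s) (u s)) *v lam s) - v s)
        has_integral (lam t - lam 0)) {0..t})"

end

theory Submission
  imports Defs
begin

lemma is_normD:
  assumes "is_norm N"
  shows "N x \<ge> 0" "N x = 0 \<longleftrightarrow> x = 0" "N (a *\<^sub>R x) = \<bar>a\<bar> * N x" "N (x + y) \<le> N x + N y"
  using assms unfolding is_norm_def by auto

lemma is_norm_minus: "is_norm N \<Longrightarrow> N (- x) = N x"
  using is_normD(3)[of N "-1" x] by simp

lemma is_norm_diff_commute: "is_norm N \<Longrightarrow> N (x - y) = N (y - x)"
  by (metis is_norm_minus minus_diff_eq)

lemma is_norm_diff: "is_norm N \<Longrightarrow> N (x - y) \<le> N x + N y"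
  by (metis diff_conv_add_uminus is_normD(4) is_norm_minus)

lemma is_norm_rev_tri: "is_norm N \<Longrightarrow> N x - N y \<le> N (x - y)"
  by (metis add.commute diff_add_cancel diff_le_eq is_normD(4))

lemma is_norm_zero: "is_norm N \<Longrightarrow> N 0 = 0"
  using is_normD(2) by blast

lemma is_norm_sum:
  assumes N: "is_norm N" shows "finite A \<Longrightarrow> N (sum f A) \<le> (\<Sum>i\<in>A. N (f i))"
proof (induction A rule: finite_induct)
  case empty then show ?case by (simp add: is_norm_zero[OF N])
next
  case (insert a A) then show ?case using is_normD(4)[OF N, of "f a" "sum f A"] by simp
qed

lemma is_norm_upper:
  fixes N :: "'a::euclidean_space \<Rightarrow> real"
  assumes N: "is_norm N"
  shows "\<exists>C>0. \<forall>x. N x \<le> C * norm x"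
proof -
  define C where "C = 1 + (\<Sum>b\<in>Basis. N b)"
  have Cpos: "C > 0" unfolding C_def using is_normD(1)[OF N] by (simp add: add_pos_nonneg sum_nonneg)
  have "N x \<le> C * norm x" for x
  proof -
    have "N x = N (\<Sum>b\<in>Basis. (x \<bullet> b) *\<^sub>R b)" by (simp add: euclidean_representation)
    also have "\<dots> \<le> (\<Sum>b\<in>Basis. N ((x \<bullet> b) *\<^sub>R b))" by (rule is_norm_sum[OF N]) simp
    also have "\<dots> = (\<Sum>b\<in>Basis. \<bar>x \<bullet> b\<bar> * N b)" using is_normD(3)[OF N] by simp
    also have "\<dots> \<le> (\<Sum>b\<in>Basis. norm x * N b)"
      by (intro sum_mono mult_right_mono) (auto simp: Basis_le_norm is_normD(1)[OF N])
    also have "\<dots> = norm x * (\<Sum>b\<in>Basis. N b)" by (simp add: sum_distrib_left)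
    also have "\<dots> \<le> C * norm x" unfolding C_def by (simp add: algebra_simps)
    finally show ?thesis .
  qed
  with Cpos show ?thesis by blast
qed

lemma is_norm_continuous:
  fixes N :: "'a::euclidean_space \<Rightarrow> real"
  assumes N: "is_norm N"
  shows "continuous_on S N"
proof -
  obtain C where C: "C > 0" "\<And>x. N x \<le> C * norm x" using is_norm_upper[OF N] by blast
  have "\<bar>N x - N y\<bar> \<le> C * dist x y" for x y
    using is_norm_rev_tri[OF N, of x y] is_norm_rev_tri[OF N, of y x] C(2)[of "x - y"]
      is_norm_diff_commute[OF N, of x y] by (auto simp: dist_norm)
  then have "C-lipschitz_on S N" by (intro lipschitz_onI) (auto simp: dist_real_def less_imp_le C)
  then show ?thesis by (rule lipschitz_on_continuous_on)
qed

lemma is_norm_lower: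
  fixes N :: "'a::euclidean_space \<Rightarrow> real"
  assumes N: "is_norm N"
  shows "\<exists>C>0. \<forall>x. norm x \<le> C * N x"
proof -
  have cs: "compact (sphere (0::'a) 1)" by simp
  have ne: "sphere (0::'a) 1 \<noteq> {}"
    using vector_choose_size[of 1] by (auto simp: sphere_def)
  obtain z where z: "z \<in> sphere 0 1" "\<And>y. y \<in> sphere 0 1 \<Longrightarrow> N z \<le> N y"
    using continuous_attains_inf[OF cs ne is_norm_continuous[OF N]] by blast
  have "z \<noteq> 0" using z(1) by auto
  then have m: "N z > 0" using is_normD(1,2)[OF N, of z] by auto
  have "norm x \<le> (1 / N z) * N x" for x
  proof (cases "x = 0")
    case True then show ?thesis by (simp add: is_norm_zero[OF N])
  next
    case False
    then have "(1 / norm x) *\<^sub>R x \<in> sphere 0 1" by simp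
    from z(2)[OF this] have "N z \<le> N x / norm x" using is_normD(3)[OF N] by simp
    then show ?thesis using m False by (simp add: field_simps)
  qed
  then show ?thesis using m by (intro exI[of _ "1 / N z"]) auto
qed

lemma mv_norm_le:
  fixes A :: "real^'n^'m"
  shows "norm (A *v x) \<le> (real CARD('m) * real CARD('n) * norm A) * norm x"
proof -
  have "\<bar>A $ i $ j\<bar> \<le> norm A" for i j
  proof -
    have "norm (A$i) \<le> norm A" by (rule Finite_Cartesian_Product.norm_nth_le)
    then show ?thesis using component_le_norm_cart[of "A$i" j] by linarith
  qed
  then have "onorm ((*v) A) \<le> real CARD('m) * real CARD('n) * norm A"
    by (rule onorm_le_matrix_component)
  moreover have "norm (A *v x) \<le> onorm ((*v) A) * norm x"
    by (rule onorm) (simp add: matrix_vector_mul_bounded_linear)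
  ultimately show ?thesis by (meson mult_right_mono norm_ge_zero order_trans)
qed

lemma exists_norm_one:
  fixes N :: "real^'n \<Rightarrow> real"
  assumes N: "is_norm N" shows "\<exists>x. N x = 1"
proof -
  obtain v :: "real^'n" where v: "norm v = 1" using vector_choose_size[of 1] by auto
  then have "v \<noteq> 0" by auto
  then have "N v > 0" using is_normD(1,2)[OF N, of v] by auto
  then show ?thesis using is_normD(3)[OF N, of "1 / N v" v] by (intro exI[of _ "(1 / N v) *\<^sub>R v"]) simp
qed

context
  fixes N :: "real^'n \<Rightarrow> real"
  assumes N: "is_norm N"
begin

lemma dual_bdd: "bdd_above {y \<bullet> z | y. N y \<le> 1}"
proof -
  obtain Cm where Cm: "Cm > 0" "\<And>x. norm x \<le> Cm * N x" using is_norm_lower[OF N] by blast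
  have "y \<bullet> z \<le> Cm * norm z" if "N y \<le> 1" for y
  proof -
    have "y \<bullet> z \<le> norm y * norm z" by (rule norm_cauchy_schwarz)
    also have "\<dots> \<le> (Cm * N y) * norm z" by (intro mult_right_mono Cm(2)) simp
    also have "\<dots> = Cm * (N y * norm z)" by simp
    also have "\<dots> \<le> Cm * norm z" using that Cm(1) is_normD(1)[OF N, of y]
      by (intro mult_left_mono mult_left_le_one_le) auto
    finally show ?thesis .
  qed
  then show ?thesis by (intro bdd_aboveI[of _ "Cm * norm z"]) auto
qed

lemma dual_upper_const: "\<exists>C>0. \<forall>z. dual_norm N z \<le> C * norm z"
proof -
  obtain Cm where Cm: "Cm > 0" "\<And>x. norm x \<le> Cm * N x" using is_norm_lower[OF N] by blast
  have "dual_norm N z \<le> Cm * norm z" for z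
    unfolding dual_norm_def
  proof (rule cSup_least)
    have "N 0 \<le> 1" by (simp add: is_norm_zero[OF N])
    then have "0 \<bullet> z \<in> {y \<bullet> z |y. N y \<le> 1}" by blast
    then show "{y \<bullet> z |y. N y \<le> 1} \<noteq> {}" by blast
  next
    fix a assume "a \<in> {y \<bullet> z |y. N y \<le> 1}"
    then obtain y where y: "a = y \<bullet> z" "N y \<le> 1" by auto
    have "y \<bullet> z \<le> norm y * norm z" by (rule norm_cauchy_schwarz)
    also have "\<dots> \<le> (Cm * N y) * norm z" by (intro mult_right_mono Cm(2)) simp
    also have "\<dots> = Cm * (N y * norm z)" by simp
    also have "\<dots> \<le> Cm * norm z" using y Cm(1) is_normD(1)[OF N, of y]
      by (intro mult_left_mono mult_left_le_one_le) auto
    finally show "a \<le> Cm * norm z" using y by simp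
  qed
  then show ?thesis using Cm by blast
qed

lemma dual_ge: "N y \<le> 1 \<Longrightarrow> y \<bullet> z \<le> dual_norm N z"
  unfolding dual_norm_def by (rule cSup_upper[OF _ dual_bdd]) auto

lemma dual_nonneg: "0 \<le> dual_norm N z"
  using dual_ge[of 0 z] by (simp add: is_norm_zero[OF N])

lemma dual_least: assumes "\<And>y. N y \<le> 1 \<Longrightarrow> y \<bullet> z \<le> M" shows "dual_norm N z \<le> M"
proof -
  have "N 0 \<le> 1" by (simp add: is_norm_zero[OF N])
    then have "0 \<bullet> z \<in> {y \<bullet> z |y. N y \<le> 1}" by blast
  then have "{y \<bullet> z |y. N y \<le> 1} \<noteq> {}" by blast
  then show ?thesis unfolding dual_norm_def by (rule cSup_least) (use assms in auto)
qed

lemma dual_inner: "y \<bullet> z \<le> N y * dual_norm N z"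
proof (cases "y = 0")
  case True then show ?thesis by (simp add: is_norm_zero[OF N])
next
  case False
  then have p: "N y > 0" using is_normD(1,2)[OF N, of y] by auto
  have "N ((1 / N y) *\<^sub>R y) = 1" using is_normD(3)[OF N, of "1 / N y" y] p by simp
  from dual_ge[OF eq_refl[OF this], of z] have "(y \<bullet> z) / N y \<le> dual_norm N z" by simp
  then show ?thesis using p by (simp add: field_simps)
qed

lemma dual_add: "dual_norm N (a + b) \<le> dual_norm N a + dual_norm N b"
  by (rule dual_least) (simp add: inner_add_right add_mono dual_ge)

lemma dual_scale_le: "dual_norm N (r *\<^sub>R a) \<le> \<bar>r\<bar> * dual_norm N a"
proof (rule dual_least)
  fix y assume y: "N y \<le> 1"
  show "y \<bullet> (r *\<^sub>R a) \<le> \<bar>r\<bar> * dual_norm N a"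
  proof (cases "r \<ge> 0")
    case True then show ?thesis using dual_ge[OF y, of a] by (simp add: mult_left_mono)
  next
    case False
    have "N (- y) \<le> 1" using y is_norm_minus[OF N] by simp
    have e: "y \<bullet> (r *\<^sub>R a) = \<bar>r\<bar> * ((- y) \<bullet> a)" using False by simp
    show ?thesis unfolding e by (rule mult_left_mono[OF dual_ge[OF \<open>N (- y) \<le> 1\<close>]]) simp
  qed
qed

lemma dual_scale: "dual_norm N (r *\<^sub>R a) = \<bar>r\<bar> * dual_norm N a"
proof (cases "r = 0")
  case True then show ?thesis using dual_scale_le[of 0 a] dual_nonneg[of 0] by simp
next
  case False
  have "dual_norm N a = dual_norm N ((1/r) *\<^sub>R (r *\<^sub>R a))" using False by simp
  also have "\<dots> \<le> \<bar>1/r\<bar> * dual_norm N (r *\<^sub>R a)" by (rule dual_scale_le)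
  finally have "\<bar>r\<bar> * dual_norm N a \<le> dual_norm N (r *\<^sub>R a)" using False
    by (simp add: field_simps)
  then show ?thesis using dual_scale_le[of r a] by linarith
qed

lemma dual_minus: "dual_norm N (- a) = dual_norm N a"
  using dual_scale[of "-1" a] by simp

lemma dual_diff: "dual_norm N (a - b) \<le> dual_norm N a + dual_norm N b"
  using dual_add[of a "-b"] dual_minus[of b] by simp

lemma ind_bound: "\<exists>K>0. \<forall>(A::real^'n^'n) x. N (A *v x) \<le> K * norm A * N x"
proof -
  obtain Cm where Cm: "Cm > 0" "\<And>x. norm x \<le> Cm * N x" using is_norm_lower[OF N] by blast
  obtain Cn where Cn: "Cn > 0" "\<And>x. N x \<le> Cn * norm x" using is_norm_upper[OF N] by blast
  define K where "K = Cn * (real CARD('n) * real CARD('n)) * Cm"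
  have "N (A *v x) \<le> K * norm A * N x" for A :: "real^'n^'n" and x
  proof -
    have "N (A *v x) \<le> Cn * norm (A *v x)" by (rule Cn(2))
    also have "\<dots> \<le> Cn * ((real CARD('n) * real CARD('n) * norm A) * norm x)"
      using mv_norm_le[of A x] Cn(1) by (simp add: mult_left_mono)
    also have "\<dots> \<le> Cn * ((real CARD('n) * real CARD('n) * norm A) * (Cm * N x))"
      using Cm(2)[of x] Cn(1) by (intro mult_left_mono) (auto intro!: mult_left_mono)
    also have "\<dots> = K * norm A * N x" unfolding K_def by (simp add: algebra_simps)
    finally show ?thesis .
  qed
  moreover have "K > 0" unfolding K_def using Cm Cn by simp
  ultimately show ?thesis by blast
qed

lemma ind_bdd: "bdd_above {N (A *v x) | x. N x = 1}"
proof -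
  obtain K where K: "K > 0" "\<And>(A::real^'n^'n) x. N (A *v x) \<le> K * norm A * N x"
    using ind_bound by blast
  show ?thesis by (rule bdd_aboveI[of _ "K * norm A"]) (auto, metis K(2) mult.right_neutral)
qed

lemma ind_ne: "{N (A *v x) | x. N x = 1} \<noteq> {}"
  using exists_norm_one[OF N] by auto

lemma ind_ge1: "N x = 1 \<Longrightarrow> N (A *v x) \<le> induced_norm N A"
  unfolding induced_norm_def by (rule cSup_upper[OF _ ind_bdd]) auto

lemma ind_nonneg: "0 \<le> induced_norm N A"
  using exists_norm_one[OF N] ind_ge1 is_normD(1)[OF N] by (meson order_trans)

lemma ind_least: "(\<And>x. N x = 1 \<Longrightarrow> N (A *v x) \<le> M) \<Longrightarrow> induced_norm N A \<le> M"
  unfolding induced_norm_def by (rule cSup_least[OF ind_ne]) auto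

lemma ind_ge: "N (A *v x) \<le> induced_norm N A * N x"
proof (cases "x = 0")
  case True then show ?thesis by (simp add: is_norm_zero[OF N])
next
  case False
  then have p: "N x > 0" using is_normD(1,2)[OF N, of x] by auto
  have "N ((1 / N x) *\<^sub>R x) = 1" using is_normD(3)[OF N, of "1 / N x" x] p by simp
  from ind_ge1[OF this, of A] have "N ((1 / N x) *\<^sub>R (A *v x)) \<le> induced_norm N A"
    by (simp add: matrix_vector_mult_scaleR)
  then have "N (A *v x) / N x \<le> induced_norm N A" using is_normD(3)[OF N] p by simp
  then show ?thesis using p by (simp add: field_simps)
qed

lemma ind_le_norm: "\<exists>K>0. \<forall>A::real^'n^'n. induced_norm N A \<le> K * norm A"
proof -
  obtain K where K: "K > 0" "\<And>(A::real^'n^'n) x. N (A *v x) \<le> K * norm A * N x"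
    using ind_bound by blast
  have "induced_norm N A \<le> K * norm A" for A
    by (rule ind_least) (metis K(2) mult.right_neutral)
  with K(1) show ?thesis by blast
qed

lemma ind_add: "induced_norm N (A + B) \<le> induced_norm N A + induced_norm N B"
proof (rule ind_least)
  fix x assume x: "N x = 1"
  have "N ((A + B) *v x) \<le> N (A *v x) + N (B *v x)"
    by (simp add: matrix_vector_mult_add_rdistrib is_normD(4)[OF N])
  also have "\<dots> \<le> induced_norm N A + induced_norm N B" using ind_ge1[OF x] by (simp add: add_mono)
  finally show "N ((A + B) *v x) \<le> induced_norm N A + induced_norm N B" .
qed

lemma ind_scale: "induced_norm N (r *\<^sub>R A) \<le> \<bar>r\<bar> * induced_norm N A"
proof (rule ind_least)
  fix x assume x: "N x = 1"
  have "N ((r *\<^sub>R A) *v x) = \<bar>r\<bar> * N (A *v x)"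
    by (simp add: scaleR_matrix_vector_assoc[symmetric] is_normD(3)[OF N])
  also have "\<dots> \<le> \<bar>r\<bar> * induced_norm N A" using ind_ge1[OF x] by (simp add: mult_left_mono)
  finally show "N ((r *\<^sub>R A) *v x) \<le> \<bar>r\<bar> * induced_norm N A" .
qed

lemma ind_id: "induced_norm N (mat 1) = 1"
proof (rule antisym)
  show "induced_norm N (mat 1) \<le> 1" by (rule ind_least) simp
  obtain x where "N x = 1" using exists_norm_one[OF N] by blast
  from ind_ge1[OF this, of "mat 1"] this show "1 \<le> induced_norm N (mat 1)" by simp
qed

lemma dual_transpose_pt:
  assumes y: "N y \<le> 1"
  shows "y \<bullet> (transpose M *v z) \<le> induced_norm N M * dual_norm N z"
proof -
  have "y \<bullet> (transpose M *v z) = (M *v y) \<bullet> z"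
  proof -
    have "(z v* M) \<bullet> y = z \<bullet> (M *v y)" by (rule dot_lmul_matrix)
    then show ?thesis by (simp only: transpose_matrix_vector inner_commute)
  qed
  also have "\<dots> \<le> N (M *v y) * dual_norm N z" by (rule dual_inner)
  also have "\<dots> \<le> (induced_norm N M * N y) * dual_norm N z"
    by (intro mult_right_mono ind_ge dual_nonneg)
  also have "\<dots> \<le> induced_norm N M * dual_norm N z"
  proof -
    have "(induced_norm N M * N y) * dual_norm N z = N y * (induced_norm N M * dual_norm N z)" by simp
    also have "\<dots> \<le> induced_norm N M * dual_norm N z"
      using y ind_nonneg[of M] dual_nonneg[of z] is_normD(1)[OF N, of y]
      by (intro mult_left_le_one_le) auto
    finally show ?thesis .
  qed
  finally show ?thesis .
qed

lemma dual_transpose: "dual_norm N (transpose M *v z) \<le> induced_norm N M * dual_norm N z"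
  by (rule dual_least) (rule dual_transpose_pt)

end

context
  fixes N :: "real^'n \<Rightarrow> real"
  assumes N: "is_norm N"
begin

lemma lognorm_mono:
  fixes A :: "real^'n^'n"
  assumes h1: "0 < h1" and h12: "h1 \<le> h2"
  shows "(induced_norm N (mat 1 + h1 *\<^sub>R A) - 1) / h1 \<le> (induced_norm N (mat 1 + h2 *\<^sub>R A) - 1) / h2"
proof -
  define s where "s = h1 / h2"
  have h2: "h2 > 0" using h1 h12 by linarith
  have s01: "0 < s" "s \<le> 1" unfolding s_def using h1 h2 h12 by auto
  have eq: "mat 1 + h1 *\<^sub>R A = s *\<^sub>R (mat 1 + h2 *\<^sub>R A) + (1 - s) *\<^sub>R mat 1"
    unfolding s_def using h2 by (simp add: algebra_simps)
  have "induced_norm N (mat 1 + h1 *\<^sub>R A) \<le> induced_norm N (s *\<^sub>R (mat 1 + h2 *\<^sub>R A)) + induced_norm N ((1 - s) *\<^sub>R mat 1)"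
    unfolding eq by (rule ind_add[OF N])
  also have "\<dots> \<le> s * induced_norm N (mat 1 + h2 *\<^sub>R A) + (1 - s) * induced_norm N (mat 1 :: real^'n^'n)"
    using ind_scale[OF N, of s] ind_scale[OF N, of "1 - s"] s01 by (intro add_mono) auto
  finally have "induced_norm N (mat 1 + h1 *\<^sub>R A) - 1 \<le> s * (induced_norm N (mat 1 + h2 *\<^sub>R A) - 1)"
    by (simp add: ind_id[OF N] algebra_simps)
  then have "(induced_norm N (mat 1 + h1 *\<^sub>R A) - 1) / h1 \<le> s * (induced_norm N (mat 1 + h2 *\<^sub>R A) - 1) / h1"
    using h1 by (simp add: divide_right_mono)
  also have "\<dots> = (induced_norm N (mat 1 + h2 *\<^sub>R A) - 1) / h2"
    unfolding s_def using h1 h2 by simp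
  finally show ?thesis .
qed

lemma lognorm_lower:
  fixes A :: "real^'n^'n"
  assumes h: "0 < h"
  shows "- induced_norm N A \<le> (induced_norm N (mat 1 + h *\<^sub>R A) - 1) / h"
proof -
  have "induced_norm N (mat 1 :: real^'n^'n) \<le> induced_norm N (mat 1 + h *\<^sub>R A) + induced_norm N ((- h) *\<^sub>R A)"
    using ind_add[OF N, of "mat 1 + h *\<^sub>R A" "(- h) *\<^sub>R A"] by simp
  also have "\<dots> \<le> induced_norm N (mat 1 + h *\<^sub>R A) + h * induced_norm N A"
    using ind_scale[OF N, of "- h" A] h by simp
  finally have "1 - h * induced_norm N A \<le> induced_norm N (mat 1 + h *\<^sub>R A)"
    by (simp add: ind_id[OF N])
  then show ?thesis using h by (simp add: field_simps)
qed

lemma lognorm_eventually: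
  fixes A :: "real^'n^'n"
  assumes lm: "log_norm N A \<le> m" and e: "e > 0"
  shows "\<exists>h0>0. \<forall>h. 0 < h \<longrightarrow> h < h0 \<longrightarrow> induced_norm N (mat 1 + h *\<^sub>R A) \<le> 1 + h * (m + e)"
proof -
  define g where "g h = (induced_norm N (mat 1 + h *\<^sub>R A) - 1) / h" for h
  define L where "L = Inf (g ` {0<..})"
  have ne: "g ` {0<..} \<noteq> {}" by auto
  have bdd: "bdd_below (g ` {0<..})"
    using lognorm_lower unfolding g_def by (intro bdd_belowI[of _ "- induced_norm N A"]) auto
  have Lle: "L \<le> g h" if "h > 0" for h unfolding L_def by (rule cInf_lower[OF _ bdd]) (use that in auto)
  have lim: "(g \<longlongrightarrow> L) (at_right 0)"
  proof (rule order_tendstoI)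
    fix a assume "a < L"
    then show "eventually (\<lambda>h. a < g h) (at_right 0)"
      using Lle eventually_at_right_real[of 0 1] by (auto elim!: eventually_mono intro: less_le_trans)
  next
    fix a assume "L < a"
    then obtain h0 where h0: "h0 > 0" "g h0 < a"
      unfolding L_def using cInf_less_iff[OF ne bdd] by auto
    have "g h < a" if "h \<in> {0<..<h0}" for h
      using lognorm_mono[of h h0 A] that h0 unfolding g_def by auto
    then show "eventually (\<lambda>h. g h < a) (at_right 0)"
      using eventually_at_right_real[OF h0(1)] by (auto elim!: eventually_mono)
  qed
  have "log_norm N A = L"
    unfolding log_norm_def using lim unfolding g_def by (intro tendsto_Lim) auto
  then have "L < m + e" using lm e by simp
  then obtain h0 where h0: "h0 > 0" "g h0 < m + e"
    unfolding L_def using cInf_less_iff[OF ne bdd] by auto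
  have "induced_norm N (mat 1 + h *\<^sub>R A) \<le> 1 + h * (m + e)" if "0 < h" "h < h0" for h
  proof -
    have "g h \<le> g h0" using lognorm_mono[of h h0 A] that unfolding g_def by auto
    with h0 have "g h \<le> m + e" by simp
    then show ?thesis using that unfolding g_def by (simp add: field_simps)
  qed
  with h0 show ?thesis by blast
qed

end

lemma fine_division_exists_endpoints:
  fixes a b :: real
  assumes "gauge g"
  obtains p where "p tagged_division_of {a..b}" "g fine p" "\<And>x K. (x,K) \<in> p \<Longrightarrow> x = Inf K \<or> x = Sup K"
proof -
  let ?P = "\<lambda>s. \<exists>p. p tagged_division_of s \<and> g fine p \<and> (\<forall>x K. (x,K)\<in>p \<longrightarrow> x = Inf K \<or> x = Sup K)"
  have "?P (cbox a b)"
  proof (rule ccontr)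
    assume False: "\<not> ?P (cbox a b)"
    obtain x where x: "x \<in> cbox a b"
      "\<And>e. 0 < e \<Longrightarrow> \<exists>c d. x \<in> cbox c d \<and> cbox c d \<subseteq> ball x e \<and> cbox c d \<subseteq> cbox a b \<and> \<not> ?P (cbox c d)"
    proof (rule interval_bisection[of ?P, OF _ _ False])
      show "?P {}" by (intro exI[of _ "{}"]) (simp add: fine_def)
    next
      fix S T assume PS: "?P S" and PT: "?P T" and disj: "interior S \<inter> interior T = {}"
      from PS obtain p1 where p1: "p1 tagged_division_of S" "g fine p1" "\<forall>x K. (x,K)\<in>p1 \<longrightarrow> x = Inf K \<or> x = Sup K"
        by blast
      from PT obtain p2 where p2: "p2 tagged_division_of T" "g fine p2" "\<forall>x K. (x,K)\<in>p2 \<longrightarrow> x = Inf K \<or> x = Sup K"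
        by blast
      have "p1 \<union> p2 tagged_division_of S \<union> T" by (rule tagged_division_Un[OF p1(1) p2(1) disj])
      moreover have "g fine (p1 \<union> p2)" by (rule fine_Un[OF p1(2) p2(2)])
      moreover have "\<forall>x K. (x,K)\<in>p1 \<union> p2 \<longrightarrow> x = Inf K \<or> x = Sup K" using p1(3) p2(3) by blast
      ultimately show "?P (S \<union> T)" by blast
    qed auto
    obtain e where e: "e > 0" "ball x e \<subseteq> g x"
      by (meson assms gauge_def openE)
    then obtain c d where cd: "x \<in> cbox c d" "cbox c d \<subseteq> ball x e" "cbox c d \<subseteq> cbox a b" "\<not> ?P (cbox c d)"
      by (meson x(2))
    have cxd: "c \<le> x" "x \<le> d" using cd(1) by auto
    have t1: "{(x, {c..x})} tagged_division_of {c..x}" by (rule tagged_division_of_self_real) (use cxd in auto)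
    have t2: "{(x, {x..d})} tagged_division_of {x..d}" by (rule tagged_division_of_self_real) (use cxd in auto)
    have "{(x, {c..x})} \<union> {(x, {x..d})} tagged_division_of {c..x} \<union> {x..d}"
      by (rule tagged_division_Un[OF t1 t2]) auto
    moreover have "{c..x} \<union> {x..d} = cbox c d" using cxd by auto
    moreover have "g fine ({(x, {c..x})} \<union> {(x, {x..d})})"
      using cd(2) e(2) cxd unfolding fine_def by (auto simp: subset_iff)
    moreover have "\<forall>y K. (y,K)\<in>{(x, {c..x})} \<union> {(x, {x..d})} \<longrightarrow> y = Inf K \<or> y = Sup K"
      using cxd by auto
    ultimately have "?P (cbox c d)" by metis
    then show False using cd(4) by blast
  qed
  then show ?thesis using that by (metis box_real(2))
qed

lemma implicit_bound:
  fixes \<Phi> :: "'a::real_vector \<Rightarrow> real"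
  assumes nonneg: "\<And>x. 0 \<le> \<Phi> x" and scale: "\<And>a x. \<Phi> (a *\<^sub>R x) = \<bar>a\<bar> * \<Phi> x"
    and tri: "\<And>x y. \<Phi> (x + y) \<le> \<Phi> x + \<Phi> y"
    and H: "\<And>\<epsilon>. \<epsilon> > 0 \<Longrightarrow> \<exists>\<eta>0>0. \<forall>\<eta>. 0 < \<eta> \<longrightarrow> \<eta> < \<eta>0 \<longrightarrow> \<Phi> (p + \<eta> *\<^sub>R q) \<le> (1 + \<eta> * (- c + \<epsilon>)) * \<Phi> p"
    and h: "h > 0"
  shows "(1 + h * c) * \<Phi> p \<le> \<Phi> (p - h *\<^sub>R q)"
proof (rule field_le_epsilon)
  fix \<delta> :: real assume \<delta>: "\<delta> > 0"
  define \<epsilon> where "\<epsilon> = \<delta> / (h * \<Phi> p + 1)"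
  have hp: "h * \<Phi> p \<ge> 0" using h nonneg by simp
  have \<epsilon>: "\<epsilon> > 0" unfolding \<epsilon>_def using \<delta> hp by simp
  have he: "h * \<epsilon> * \<Phi> p \<le> \<delta>"
  proof -
    have "h * \<epsilon> * \<Phi> p = \<delta> * (h * \<Phi> p / (h * \<Phi> p + 1))" unfolding \<epsilon>_def using hp by (simp add: field_simps)
    also have "\<dots> \<le> \<delta> * 1" using hp \<delta> by (intro mult_left_mono) auto
    finally show ?thesis by simp
  qed
  obtain \<eta>0 where \<eta>0: "\<eta>0 > 0" "\<And>\<eta>. 0 < \<eta> \<Longrightarrow> \<eta> < \<eta>0 \<Longrightarrow> \<Phi> (p + \<eta> *\<^sub>R q) \<le> (1 + \<eta> * (- c + \<epsilon>)) * \<Phi> p"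
    using H[OF \<epsilon>] by blast
  define \<eta> where "\<eta> = \<eta>0 / 2"
  have \<eta>: "0 < \<eta>" "\<eta> < \<eta>0" unfolding \<eta>_def using \<eta>0 by auto
  have eq: "(1 + \<eta> / h) *\<^sub>R p = (p + \<eta> *\<^sub>R q) + (\<eta> / h) *\<^sub>R (p - h *\<^sub>R q)"
    using h by (simp add: algebra_simps)
  have "(1 + \<eta> / h) * \<Phi> p = \<Phi> ((1 + \<eta> / h) *\<^sub>R p)" using scale \<eta> h by simp
  also have "\<dots> \<le> \<Phi> (p + \<eta> *\<^sub>R q) + \<Phi> ((\<eta> / h) *\<^sub>R (p - h *\<^sub>R q))" unfolding eq by (rule tri)
  also have "\<dots> \<le> (1 + \<eta> * (- c + \<epsilon>)) * \<Phi> p + (\<eta> / h) * \<Phi> (p - h *\<^sub>R q)"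
    using \<eta>0(2)[OF \<eta>] scale \<eta> h by simp
  finally have "(1 + \<eta> / h) * \<Phi> p \<le> (1 + \<eta> * (- c + \<epsilon>)) * \<Phi> p + (\<eta> / h) * \<Phi> (p - h *\<^sub>R q)" .
  then have "(\<eta> / h) * ((1 + h * c - h * \<epsilon>) * \<Phi> p) \<le> (\<eta> / h) * \<Phi> (p - h *\<^sub>R q)"
    using h by (simp add: algebra_simps)
  then have "(1 + h * c - h * \<epsilon>) * \<Phi> p \<le> \<Phi> (p - h *\<^sub>R q)"
    by (rule mult_left_le_imp_le) (use h \<eta> in simp)
  then show "(1 + h * c) * \<Phi> p \<le> \<Phi> (p - h *\<^sub>R q) + \<delta>"
    using he by (simp add: algebra_simps)
qed

lemma exp_le_inv: "(x::real) < 1 \<Longrightarrow> exp x \<le> 1 / (1 - x)"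
proof -
  assume x: "x < 1"
  have "1 - x \<le> exp (- x)" using exp_ge_add_one_self[of "- x"] by simp
  then have "1 / exp (- x) \<le> 1 / (1 - x)" using x by (intro divide_left_mono) auto
  moreover have "exp x = 1 / exp (- x)" by (simp add: exp_minus divide_inverse)
  ultimately show ?thesis by simp
qed

lemma expL1:
  fixes h c' c1 :: real
  assumes "0 \<le> h" "c' * h < 1" "c' \<le> c1" "0 < c'"
  shows "exp (c' * h) * (1 - h * c1) \<le> 1"
proof (cases "1 - h * c1 \<le> 0")
  case True
  have "exp (c' * h) * (1 - h * c1) \<le> 0" using True mult_nonneg_nonpos[of "exp (c'*h)" "1 - h*c1"] by simp
  then show ?thesis by simp
next
  case False
  have "exp (c' * h) * (1 - h * c1) \<le> (1 / (1 - c' * h)) * (1 - h * c1)"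
    using exp_le_inv[OF assms(2)] False by (intro mult_right_mono) auto
  also have "\<dots> \<le> 1" using assms False by (simp add: field_simps mult_right_mono)
  finally show ?thesis .
qed

lemma expL2:
  fixes h c' c :: real
  assumes "0 \<le> h" "c' * h < 1" "c * c' * h \<le> c - c'" "0 < c'"
  shows "exp (c' * h) \<le> 1 + h * c"
proof -
  have "exp (c' * h) \<le> 1 / (1 - c' * h)" by (rule exp_le_inv[OF assms(2)])
  also have "\<dots> \<le> 1 + h * c"
  proof -
    have "h * (c' + c * c' * h) \<le> h * c" using assms by (intro mult_left_mono) auto
    then have "1 \<le> (1 + h * c) * (1 - c' * h)" by (simp add: algebra_simps)
    then show ?thesis using assms(2) by (simp add: field_simps)
  qed
  finally show ?thesis .
qed

lemma expL3:
  fixes h c' :: real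
  assumes "0 \<le> h" "c' * h \<le> 1/2" "0 < c'"
  shows "exp (c' * h) - 1 \<le> 2 * c' * h" "exp (c' * h) \<le> 2"
proof -
  have a: "c' * h < 1" using assms by simp
  have "exp (c' * h) \<le> 1 / (1 - c' * h)" by (rule exp_le_inv[OF a])
  moreover have "1 / (1 - c' * h) - 1 \<le> 2 * c' * h"
  proof -
    have "1 / (1 - c' * h) - 1 = c' * h / (1 - c' * h)" using a by (simp add: field_simps)
    also have "\<dots> \<le> c' * h / (1/2)" using assms a by (intro divide_left_mono) auto
    finally show ?thesis by simp
  qed
  ultimately show "exp (c' * h) - 1 \<le> 2 * c' * h" by linarith
  then show "exp (c' * h) \<le> 2" using assms by linarith
qed

lemma contraction_integral_aux:
  fixes \<Phi> :: "'a::euclidean_space \<Rightarrow> real" and e g q :: "real \<Rightarrow> 'a"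
  assumes nonneg: "\<And>x. 0 \<le> \<Phi> x" and scale: "\<And>a x. \<Phi> (a *\<^sub>R x) = \<bar>a\<bar> * \<Phi> x"
    and tri: "\<And>x y. \<Phi> (x + y) \<le> \<Phi> x + \<Phi> y"
    and Cb: "\<And>x. \<Phi> x \<le> C * norm x"
    and c: "c > 0" and R: "R \<ge> 0"
    and int: "\<And>t. t \<in> {0..L} \<Longrightarrow> (g has_integral (e t - e 0)) {0..t}"
    and gq: "\<And>s. s \<in> {0..L} \<Longrightarrow> \<Phi> (g s - q s) \<le> R"
    and contr: "\<And>s \<epsilon>. s \<in> {0..L} \<Longrightarrow> \<epsilon> > 0 \<Longrightarrow>
        \<exists>\<eta>0>0. \<forall>\<eta>. 0 < \<eta> \<longrightarrow> \<eta> < \<eta>0 \<longrightarrow> \<Phi> (e s + \<eta> *\<^sub>R q s) \<le> (1 + \<eta> * (- c + \<epsilon>)) * \<Phi> (e s)"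
    and t: "t \<in> {0..L}"
    and c': "0 < c'" "c' < c"
  shows "exp (c' * t) * (\<Phi> (e t) - R / c') \<le> \<Phi> (e 0) - R / c'"
proof -
  define V where "V \<tau> = exp (c' * \<tau>) * (\<Phi> (e \<tau>) - R / c')" for \<tau>
  have Phi_neg: "\<Phi> (- x) = \<Phi> x" for x using scale[of "-1" x] by simp
  have Phi_tri3: "\<Phi> (x + y + z) \<le> \<Phi> x + \<Phi> y + \<Phi> z" for x y z
    using tri[of "x + y" z] tri[of x y] by linarith
  have C0: "C \<ge> 0"
  proof -
    obtain v :: 'a where "norm v = 1" using vector_choose_size[of 1] by auto
    then show ?thesis using Cb[of v] nonneg[of v] by simp
  qed
  have L0: "0 \<le> t" "t \<le> L" using t by auto
  have intg: "g integrable_on {0..s}" if "s \<in> {0..L}" for s using int[OF that] by blast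
  have integral_eq: "integral {\<alpha>..\<beta>} g = e \<beta> - e \<alpha>" if "0 \<le> \<alpha>" "\<alpha> \<le> \<beta>" "\<beta> \<le> L" for \<alpha> \<beta>
  proof -
    have "integral {0..\<alpha>} g + integral {\<alpha>..\<beta>} g = integral {0..\<beta>} g"
      by (rule Henstock_Kurzweil_Integration.integral_combine) (use that intg in auto)
    moreover have "integral {0..\<alpha>} g = e \<alpha> - e 0" using int[of \<alpha>] that by (auto intro: integral_unique)
    moreover have "integral {0..\<beta>} g = e \<beta> - e 0" using int[of \<beta>] that by (auto intro: integral_unique)
    ultimately show ?thesis by (simp add: algebra_simps)
  qed
  define c1 where "c1 = (c + c') / 2"
  have c1: "c' < c1" "c1 < c" using c' unfolding c1_def by auto
  have ex: "\<forall>s. \<exists>\<eta>0. s \<in> {0..L} \<longrightarrow> \<eta>0 > 0 \<and> (\<forall>\<eta>. 0 < \<eta> \<longrightarrow> \<eta> < \<eta>0 \<longrightarrow> \<Phi> (e s + \<eta> *\<^sub>R q s) \<le> (1 - \<eta> * c1) * \<Phi> (e s))"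
  proof
    fix s
    show "\<exists>\<eta>0. s \<in> {0..L} \<longrightarrow> \<eta>0 > 0 \<and> (\<forall>\<eta>. 0 < \<eta> \<longrightarrow> \<eta> < \<eta>0 \<longrightarrow> \<Phi> (e s + \<eta> *\<^sub>R q s) \<le> (1 - \<eta> * c1) * \<Phi> (e s))"
    proof (cases "s \<in> {0..L}")
      case True
      have "c - c1 > 0" using c1 by simp
      from contr[OF True this] obtain d where d: "d > 0"
        "\<forall>\<eta>. 0 < \<eta> \<longrightarrow> \<eta> < d \<longrightarrow> \<Phi> (e s + \<eta> *\<^sub>R q s) \<le> (1 + \<eta> * (- c + (c - c1))) * \<Phi> (e s)"
        by blast
      have "1 + \<eta> * (- c + (c - c1)) = 1 - \<eta> * c1" for \<eta> :: real by (simp add: algebra_simps)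
      then show ?thesis using d by (intro exI[of _ d]) simp
    next
      case False then show ?thesis by blast
    qed
  qed
  from choice[OF ex] obtain \<eta>0 where \<eta>0all: "\<forall>s. s \<in> {0..L} \<longrightarrow> \<eta>0 s > 0 \<and> (\<forall>\<eta>. 0 < \<eta> \<longrightarrow> \<eta> < \<eta>0 s \<longrightarrow> \<Phi> (e s + \<eta> *\<^sub>R q s) \<le> (1 - \<eta> * c1) * \<Phi> (e s))"
    by blast
  have \<eta>0: "\<And>s. s \<in> {0..L} \<Longrightarrow> \<eta>0 s > 0"
    "\<And>s \<eta>. s \<in> {0..L} \<Longrightarrow> 0 < \<eta> \<Longrightarrow> \<eta> < \<eta>0 s \<Longrightarrow> \<Phi> (e s + \<eta> *\<^sub>R q s) \<le> (1 - \<eta> * c1) * \<Phi> (e s)"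
    using \<eta>0all by auto
  have main: "V t - V 0 \<le> exp (c' * L) * (\<epsilon> * t + 2 * C * \<epsilon>)" if \<epsilon>: "\<epsilon> > 0" for \<epsilon>
  proof (cases "t = 0")
    case True then show ?thesis using \<epsilon> C0 by simp
  next
    case False
    then have tpos: "t > 0" using L0 by simp
    have intgt: "g integrable_on cbox 0 t" using intg[OF t] by (simp only: box_real(2))
    obtain \<gamma>H where \<gamma>H: "gauge \<gamma>H"
      "\<And>p. p tagged_partial_division_of cbox 0 t \<Longrightarrow> \<gamma>H fine p \<Longrightarrow>
         (\<Sum>(x,k)\<in>p. norm (measure lborel k *\<^sub>R g x - integral k g)) < \<epsilon>"
      by (rule Henstock_lemma[OF intgt \<epsilon>]) blast
    define H where "H s = min (if s \<in> {0..L} then \<eta>0 s else 1) (min (1 / (2 * c')) (min ((c - c') / (c * c')) (\<epsilon> / (2 * c' * R + 1))))" for s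
    have Hpos: "H s > 0" for s
      unfolding H_def using \<eta>0(1) c' c R \<epsilon> by (auto intro!: divide_pos_pos add_nonneg_pos)
    define \<gamma> where "\<gamma> s = \<gamma>H s \<inter> ball s (H s / 2)" for s
    have "gauge \<gamma>" unfolding \<gamma>_def using \<gamma>H(1) gauge_ball_dependent[of "\<lambda>s. H s / 2"] Hpos
      by (intro gauge_Int) auto
    then obtain p where p: "p tagged_division_of {0..t}" "\<gamma> fine p" "\<And>x K. (x,K) \<in> p \<Longrightarrow> x = Inf K \<or> x = Sup K"
      using fine_division_exists_endpoints by blast
    have pfin: "finite p" using p(1) by blast
    have fineH: "\<gamma>H fine p" and fineB: "(\<lambda>s. ball s (H s / 2)) fine p"
      using p(2) unfolding \<gamma>_def fine_Int by auto
    have ptp: "p tagged_partial_division_of cbox 0 t" using p(1) unfolding tagged_division_of_def by simp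
    have Hsum: "(\<Sum>(x,k)\<in>p. norm (measure lborel k *\<^sub>R g x - integral k g)) < \<epsilon>" by (rule \<gamma>H(2)[OF ptp fineH])
    have per: "V (Sup K) - V (Inf K) \<le> exp (c' * L) * (\<epsilon> * measure lborel K + 2 * C * norm (measure lborel K *\<^sub>R g x - integral K g))"
      if xK: "(x, K) \<in> p" for x K
    proof -
      obtain \<alpha> \<beta> where K: "K = cbox \<alpha> \<beta>" using p(1) xK by blast
      have xin: "x \<in> K" using p(1) xK by blast
      have Ksub: "K \<subseteq> {0..t}" using p(1) xK by blast
      have ab: "\<alpha> \<le> \<beta>" "\<alpha> \<le> x" "x \<le> \<beta>" using xin K by auto
      have K': "K = {\<alpha>..\<beta>}" using K by simp
      have a0: "0 \<le> \<alpha>" "\<beta> \<le> t" using Ksub K' ab by auto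
      have infsup: "Inf K = \<alpha>" "Sup K = \<beta>" using K' ab by auto
      have cont: "measure lborel K = \<beta> - \<alpha>" using K' ab by simp
      define h where "h = \<beta> - \<alpha>"
      have xL: "x \<in> {0..L}" using ab a0 L0 by auto
      have "K \<subseteq> ball x (H x / 2)" using fineB xK unfolding fine_def by blast
      moreover have "\<alpha> \<in> K" "\<beta> \<in> K" using K' ab by auto
      ultimately have "\<alpha> \<in> ball x (H x / 2)" "\<beta> \<in> ball x (H x / 2)" by auto
      then have "dist x \<alpha> < H x / 2" "dist x \<beta> < H x / 2" by auto
      then have "x - \<alpha> < H x / 2" "\<beta> - x < H x / 2" using ab by (auto simp: dist_real_def)
      then have hH: "h < H x" unfolding h_def by linarith
      have h0: "h \<ge> 0" unfolding h_def using ab by simp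
      have hc'h: "c' * h \<le> 1/2"
      proof -
        have "h \<le> 1 / (2 * c')" using hH unfolding H_def by auto
        then show ?thesis using c' by (simp add: field_simps)
      qed
      have hcc: "c * c' * h \<le> c - c'"
      proof -
        have "h \<le> (c - c') / (c * c')" using hH unfolding H_def by auto
        then show ?thesis using c' c by (simp add: field_simps)
      qed
      have hR: "h * (2 * c' * R + 1) \<le> \<epsilon>"
      proof -
        have "h \<le> \<epsilon> / (2 * c' * R + 1)" using hH unfolding H_def by auto
        moreover have "2 * c' * R + 1 > 0" using c' R by (simp add: add_nonneg_pos)
        ultimately show ?thesis by (simp add: field_simps)
      qed
      have h\<eta>: "h < \<eta>0 x" using hH xL unfolding H_def by auto
      define err where "err = integral K g - h *\<^sub>R g x"
      have normerr: "norm (measure lborel K *\<^sub>R g x - integral K g) = norm err"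
        unfolding err_def cont h_def by (simp add: norm_minus_commute)
      define E where "E = \<Phi> err"
      have E0: "0 \<le> E" unfolding E_def by (rule nonneg)
      have EC: "E \<le> C * norm err" unfolding E_def by (rule Cb)
      have intK: "integral K g = e \<beta> - e \<alpha>" unfolding K' by (rule integral_eq) (use a0 ab L0 in auto)
      have eb: "e \<beta> = e \<alpha> + h *\<^sub>R g x + err" unfolding err_def intK by simp
      define k where "k = exp (c' * h)"
      have k1: "1 + c' * h \<le> k" unfolding k_def using exp_ge_add_one_self[of "c' * h"] by simp
      have k2: "k \<le> 2" "k - 1 \<le> 2 * c' * h" unfolding k_def using expL3[OF h0 hc'h c'(1)] by auto
      have kdiv: "h \<le> (k - 1) / c'" using k1 c' by (simp add: field_simps)
      have Rk: "R * (k - 1) \<le> \<epsilon>"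
      proof -
        have "R * (k - 1) \<le> R * (2 * c' * h)" using k2 R by (intro mult_left_mono) auto
        also have "\<dots> \<le> h * (2 * c' * R + 1)" using h0 by (simp add: algebra_simps)
        finally show ?thesis using hR by linarith
      qed
      have Vdiff: "V (Sup K) - V (Inf K) = exp (c' * \<alpha>) * (k * (\<Phi> (e \<beta>) - R / c') - (\<Phi> (e \<alpha>) - R / c'))"
        unfolding V_def infsup k_def h_def by (simp add: algebra_simps flip: exp_add)
      have key: "k * (\<Phi> (e \<beta>) - R / c') - (\<Phi> (e \<alpha>) - R / c') \<le> h * \<epsilon> + 2 * E"
      proof (cases "h = 0")
        case True
        then have "\<beta> = \<alpha>" unfolding h_def by simp
        then show ?thesis using True E0 unfolding k_def by simp
      next
        case False
        then have hpos: "h > 0" using h0 by simp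
        consider "x = \<alpha>" | "x = \<beta>" using p(3)[OF xK] infsup by auto
        then show ?thesis
        proof cases
          case 1
          have "e \<beta> = (e \<alpha> + h *\<^sub>R q \<alpha>) + h *\<^sub>R (g \<alpha> - q \<alpha>) + err"
            using eb 1 by (simp add: algebra_simps)
          then have "\<Phi> (e \<beta>) \<le> \<Phi> (e \<alpha> + h *\<^sub>R q \<alpha>) + \<Phi> (h *\<^sub>R (g \<alpha> - q \<alpha>)) + E"
            unfolding E_def using Phi_tri3 by metis
          also have "\<Phi> (h *\<^sub>R (g \<alpha> - q \<alpha>)) \<le> h * R"
            using scale gq[of \<alpha>] xL 1 h0 by (simp add: mult_left_mono)
          also have "\<Phi> (e \<alpha> + h *\<^sub>R q \<alpha>) \<le> (1 - h * c1) * \<Phi> (e \<alpha>)"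
            using \<eta>0(2)[of \<alpha> h] xL 1 hpos h\<eta> by simp
          finally have b: "\<Phi> (e \<beta>) \<le> (1 - h * c1) * \<Phi> (e \<alpha>) + h * R + E" by simp
          have kk: "k * (1 - h * c1) \<le> 1" unfolding k_def
            by (rule expL1) (use h0 hc'h c1 c' in auto)
          have t1: "k * ((1 - h * c1) * \<Phi> (e \<alpha>)) \<le> \<Phi> (e \<alpha>)"
            using mult_right_mono[OF kk nonneg[of "e \<alpha>"]] by (simp add: mult.assoc)
          have t2: "R * (k * h - (k - 1) / c') \<le> h * \<epsilon>"
          proof -
            have "k * h - (k - 1) / c' \<le> h * (k - 1)" using kdiv by (simp add: algebra_simps)
            then have "R * (k * h - (k - 1) / c') \<le> R * (h * (k - 1))" using R by (intro mult_left_mono)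
            also have "\<dots> = h * (R * (k - 1))" by simp
            also have "\<dots> \<le> h * \<epsilon>" using Rk h0 by (intro mult_left_mono)
            finally show ?thesis .
          qed
          have t3: "k * E \<le> 2 * E" using k2 E0 by (intro mult_right_mono) auto
          have kpos: "k > 0" unfolding k_def by simp
          have "k * \<Phi> (e \<beta>) \<le> k * ((1 - h * c1) * \<Phi> (e \<alpha>) + h * R + E)"
            using b kpos by (intro mult_left_mono) auto
          then have "k * (\<Phi> (e \<beta>) - R / c') - (\<Phi> (e \<alpha>) - R / c')
              \<le> k * ((1 - h * c1) * \<Phi> (e \<alpha>)) - \<Phi> (e \<alpha>) + R * (k * h - (k - 1) / c') + k * E"
            by (simp add: algebra_simps diff_divide_distrib)
          then show ?thesis using t1 t2 t3 by linarith
        next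
          case 2
          have impl: "(1 + h * c) * \<Phi> (e \<beta>) \<le> \<Phi> (e \<beta> - h *\<^sub>R q \<beta>)"
            by (rule implicit_bound[OF nonneg scale tri contr hpos]) (use xL 2 in auto)
          have "e \<beta> - h *\<^sub>R q \<beta> = e \<alpha> + h *\<^sub>R (g \<beta> - q \<beta>) + err"
            using eb 2 by (simp add: algebra_simps)
          then have "\<Phi> (e \<beta> - h *\<^sub>R q \<beta>) \<le> \<Phi> (e \<alpha>) + \<Phi> (h *\<^sub>R (g \<beta> - q \<beta>)) + E"
            unfolding E_def using Phi_tri3 by metis
          also have "\<Phi> (h *\<^sub>R (g \<beta> - q \<beta>)) \<le> h * R"
            using scale gq[of \<beta>] xL 2 h0 by (simp add: mult_left_mono)
          finally have b: "(1 + h * c) * \<Phi> (e \<beta>) \<le> \<Phi> (e \<alpha>) + h * R + E" using impl by linarith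
          have kk: "k \<le> 1 + h * c" unfolding k_def
            by (rule expL2) (use h0 hc'h hcc c' in auto)
          have "k * \<Phi> (e \<beta>) \<le> (1 + h * c) * \<Phi> (e \<beta>)" using kk nonneg by (rule mult_right_mono)
          with b have b2: "k * \<Phi> (e \<beta>) \<le> \<Phi> (e \<alpha>) + h * R + E" by linarith
          have "h * R \<le> ((k - 1) / c') * R" using kdiv R by (rule mult_right_mono)
          then have t2: "h * R \<le> (k - 1) * R / c'" by simp
          have "k * (\<Phi> (e \<beta>) - R / c') - (\<Phi> (e \<alpha>) - R / c') = k * \<Phi> (e \<beta>) - \<Phi> (e \<alpha>) - (k - 1) * R / c'"
            by (simp add: algebra_simps diff_divide_distrib)
          then show ?thesis using b2 t2 E0 h0 \<epsilon> by (smt (verit) mult_nonneg_nonneg)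
        qed
      qed
      have bracket0: "0 \<le> h * \<epsilon> + 2 * E" using h0 \<epsilon> E0 by simp
      have "exp (c' * \<alpha>) \<le> exp (c' * L)" using a0 ab L0 c' by simp
      then have "exp (c' * \<alpha>) * (k * (\<Phi> (e \<beta>) - R / c') - (\<Phi> (e \<alpha>) - R / c')) \<le> exp (c' * L) * (h * \<epsilon> + 2 * E)"
        using key bracket0 by (meson exp_ge_zero mult_left_mono mult_right_mono order_trans)
      also have "\<dots> \<le> exp (c' * L) * (\<epsilon> * measure lborel K + 2 * C * norm (measure lborel K *\<^sub>R g x - integral K g))"
        unfolding normerr unfolding cont h_def[symmetric] using EC by (intro mult_left_mono) (auto simp: mult.commute)
      finally show ?thesis unfolding Vdiff .
    qed
    have "V t - V 0 = (\<Sum>(x,K)\<in>p. V (Sup K) - V (Inf K))"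
      using additive_tagged_division_1[OF L0(1) p(1), of V] by simp
    also have "\<dots> \<le> (\<Sum>(x,K)\<in>p. exp (c' * L) * (\<epsilon> * measure lborel K + 2 * C * norm (measure lborel K *\<^sub>R g x - integral K g)))"
      using per by (intro sum_mono) auto
    also have "\<dots> = exp (c' * L) * (\<epsilon> * (\<Sum>(x,K)\<in>p. measure lborel K) + 2 * C * (\<Sum>(x,K)\<in>p. norm (measure lborel K *\<^sub>R g x - integral K g)))"
      by (simp add: split_def sum_distrib_left sum.distrib flip: sum_distrib_left distrib_left)
    also have "(\<Sum>(x,K)\<in>p. measure lborel K) = t"
      using additive_content_tagged_division[of p 0 t] p(1) L0 by simp
    also have "exp (c' * L) * (\<epsilon> * t + 2 * C * (\<Sum>(x,K)\<in>p. norm (measure lborel K *\<^sub>R g x - integral K g))) \<le> exp (c' * L) * (\<epsilon> * t + 2 * C * \<epsilon>)"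
      using Hsum C0 by (intro mult_left_mono add_left_mono) auto
    finally show ?thesis .
  qed
  have "V t \<le> V 0"
  proof (rule field_le_epsilon)
    fix \<delta> :: real assume \<delta>: "\<delta> > 0"
    define K0 where "K0 = exp (c' * L) * (t + 2 * C) + 1"
    have K0: "K0 > 0" unfolding K0_def using L0 C0 by (simp add: add_nonneg_pos)
    have "V t - V 0 \<le> exp (c' * L) * ((\<delta> / K0) * t + 2 * C * (\<delta> / K0))"
      using main[of "\<delta> / K0"] \<delta> K0 by simp
    also have "\<dots> = (\<delta> / K0) * (exp (c' * L) * (t + 2 * C))" by (simp add: algebra_simps)
    also have "\<dots> \<le> (\<delta> / K0) * K0"
    proof (rule mult_left_mono)
      show "exp (c' * L) * (t + 2 * C) \<le> K0" unfolding K0_def by simp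
      show "0 \<le> \<delta> / K0" using \<delta> K0 by simp
    qed
    also have "\<dots> = \<delta>" using K0 by simp
    finally show "V t \<le> V 0 + \<delta>" by simp
  qed
  then show ?thesis unfolding V_def by simp
qed

lemma contraction_integral:
  fixes \<Phi> :: "'a::euclidean_space \<Rightarrow> real" and e g q :: "real \<Rightarrow> 'a"
  assumes nonneg: "\<And>x. 0 \<le> \<Phi> x" and scale: "\<And>a x. \<Phi> (a *\<^sub>R x) = \<bar>a\<bar> * \<Phi> x"
    and tri: "\<And>x y. \<Phi> (x + y) \<le> \<Phi> x + \<Phi> y"
    and Cb: "\<And>x. \<Phi> x \<le> C * norm x"
    and c: "c > 0" and R: "R \<ge> 0"
    and int: "\<And>t. t \<in> {0..L} \<Longrightarrow> (g has_integral (e t - e 0)) {0..t}"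
    and gq: "\<And>s. s \<in> {0..L} \<Longrightarrow> \<Phi> (g s - q s) \<le> R"
    and contr: "\<And>s \<epsilon>. s \<in> {0..L} \<Longrightarrow> \<epsilon> > 0 \<Longrightarrow>
        \<exists>\<eta>0>0. \<forall>\<eta>. 0 < \<eta> \<longrightarrow> \<eta> < \<eta>0 \<longrightarrow> \<Phi> (e s + \<eta> *\<^sub>R q s) \<le> (1 + \<eta> * (- c + \<epsilon>)) * \<Phi> (e s)"
    and t: "t \<in> {0..L}"
  shows "\<Phi> (e t) \<le> exp (- c * t) * \<Phi> (e 0) + R * (1 - exp (- c * t)) / c"
proof -
  define F where "F c' = exp (- c' * t) * \<Phi> (e 0) + R * (1 - exp (- c' * t)) / c'" for c'
  have ev: "eventually (\<lambda>c'. \<Phi> (e t) \<le> F c') (at_left c)"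
  proof -
    have "\<Phi> (e t) \<le> F c'" if c': "c' \<in> {c/2<..<c}" for c'
    proof -
      have c'p: "0 < c'" "c' < c" using c' c by auto
      have a: "exp (c' * t) * (\<Phi> (e t) - R / c') \<le> \<Phi> (e 0) - R / c'"
        by (rule contraction_integral_aux[OF nonneg scale tri Cb c R int gq contr t c'p]) auto
      have m: "exp (- c' * t) * (exp (c' * t) * (\<Phi> (e t) - R / c')) \<le> exp (- c' * t) * (\<Phi> (e 0) - R / c')"
        using a by (intro mult_left_mono) auto
      have eq: "exp (- c' * t) * (exp (c' * t) * Y) = Y" for Y
        by (simp add: mult.assoc[symmetric] flip: exp_add)
      have "\<Phi> (e t) - R / c' \<le> exp (- c' * t) * (\<Phi> (e 0) - R / c')"
        using m unfolding eq .
      then show ?thesis unfolding F_def by (simp add: algebra_simps diff_divide_distrib)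
    qed
    moreover have "eventually (\<lambda>c'. c' \<in> {c/2<..<c}) (at_left c)"
      by (rule eventually_at_left_real) (use c in simp)
    ultimately show ?thesis by (auto elim!: eventually_mono)
  qed
  have lim: "(F \<longlongrightarrow> F c) (at_left c)"
    unfolding F_def using c by (intro tendsto_intros) auto
  have "\<Phi> (e t) \<le> F c"
    by (rule tendsto_le[OF _ lim tendsto_const ev]) simp
  then show ?thesis unfolding F_def .
qed

lemma reverse_integral:
  fixes g e :: "real \<Rightarrow> 'a::euclidean_space"
  assumes int: "\<And>t. t \<in> {0..T} \<Longrightarrow> (g has_integral (e t - e 0)) {0..t}"
    and \<tau>: "\<tau> \<in> {0..T}"
  shows "((\<lambda>\<sigma>. - g (T - \<sigma>)) has_integral (e (T - \<tau>) - e T)) {0..\<tau>}"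
proof -
  define s0 where "s0 = T - \<tau>"
  have s0: "0 \<le> s0" "s0 \<le> T" using \<tau> unfolding s0_def by auto
  have intT: "g integrable_on {0..T}" using int[of T] s0 by auto
  have "integral {0..s0} g + integral {s0..T} g = integral {0..T} g"
    by (rule Henstock_Kurzweil_Integration.integral_combine) (use s0 intT in auto)
  moreover have "integral {0..s0} g = e s0 - e 0" using int[of s0] s0 by (auto intro: integral_unique)
  moreover have "integral {0..T} g = e T - e 0" using int[of T] s0 by (auto intro: integral_unique)
  ultimately have ieq: "integral {s0..T} g = e T - e s0" by (simp add: algebra_simps)
  have "g integrable_on {s0..T}" by (rule integrable_subinterval_real[OF intT]) (use s0 in auto)
  then have h1: "(g has_integral (e T - e s0)) {s0..T}" using ieq by (metis has_integral_integral)
  then have h2: "((\<lambda>x. g (- x)) has_integral (e T - e s0)) {- T..- s0}"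
    by (simp only: has_integral_reflect_real)
  have h3: "((\<lambda>x. g (- (x + (- T)))) has_integral (e T - e s0)) {- T - (- T)..- s0 - (- T)}"
    by (rule has_integral_shift_real_ivl[OF h2])
  have eqI: "{- T - (- T)..- s0 - (- T)} = {0..\<tau>}" unfolding s0_def by simp
  have eqf: "(\<lambda>x. g (- (x + (- T)))) = (\<lambda>\<sigma>. g (T - \<sigma>))" by (simp add: algebra_simps)
  have "((\<lambda>\<sigma>. g (T - \<sigma>)) has_integral (e T - e s0)) {0..\<tau>}" using h3 unfolding eqI eqf .
  from has_integral_neg[OF this] show ?thesis unfolding s0_def by simp
qed

context
  fixes N :: "real^'n \<Rightarrow> real"
  assumes N: "is_norm N"
begin

lemma uniform_lognorm:
  fixes M :: "real \<Rightarrow> real^'n^'n"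
  assumes contM: "continuous_on {0..1} M"
    and ln: "\<And>\<theta>. \<theta> \<in> {0..1} \<Longrightarrow> log_norm N (M \<theta>) \<le> m"
    and e: "\<epsilon> > 0"
  shows "\<exists>\<eta>0>0. \<forall>\<eta> \<theta>. 0 < \<eta> \<longrightarrow> \<eta> < \<eta>0 \<longrightarrow> \<theta> \<in> {0..1} \<longrightarrow>
           induced_norm N (mat 1 + \<eta> *\<^sub>R M \<theta>) \<le> 1 + \<eta> * (m + \<epsilon>)"
proof -
  obtain KK where KK: "KK > 0" "\<And>A::real^'n^'n. induced_norm N A \<le> KK * norm A"
    using ind_le_norm[OF N] by blast
  have ex: "\<forall>\<theta>. \<exists>hr. \<theta> \<in> {0..1} \<longrightarrow> fst hr > 0 \<and> snd hr > 0 \<and>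
     (\<forall>h. 0 < h \<longrightarrow> h < fst hr \<longrightarrow> induced_norm N (mat 1 + h *\<^sub>R M \<theta>) \<le> 1 + h * (m + \<epsilon>/2)) \<and>
     (\<forall>\<theta>'\<in>{0..1}. dist \<theta>' \<theta> < snd hr \<longrightarrow> dist (M \<theta>') (M \<theta>) < \<epsilon> / (2 * KK))"
  proof
    fix \<theta>
    show "\<exists>hr. \<theta> \<in> {0..1} \<longrightarrow> fst hr > 0 \<and> snd hr > 0 \<and>
     (\<forall>h. 0 < h \<longrightarrow> h < fst hr \<longrightarrow> induced_norm N (mat 1 + h *\<^sub>R M \<theta>) \<le> 1 + h * (m + \<epsilon>/2)) \<and>
     (\<forall>\<theta>'\<in>{0..1}. dist \<theta>' \<theta> < snd hr \<longrightarrow> dist (M \<theta>') (M \<theta>) < \<epsilon> / (2 * KK))"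
    proof (cases "\<theta> \<in> {0..1}")
      case True
      obtain h0 where h0: "h0 > 0" "\<forall>h. 0 < h \<longrightarrow> h < h0 \<longrightarrow> induced_norm N (mat 1 + h *\<^sub>R M \<theta>) \<le> 1 + h * (m + \<epsilon>/2)"
        using lognorm_eventually[OF N ln[OF True], of "\<epsilon>/2"] e by auto
      have "\<epsilon> / (2 * KK) > 0" using e KK by simp
      then obtain r where r: "r > 0" "\<forall>\<theta>'\<in>{0..1}. dist \<theta>' \<theta> < r \<longrightarrow> dist (M \<theta>') (M \<theta>) < \<epsilon> / (2 * KK)"
        using contM True unfolding continuous_on_iff by metis
      show ?thesis using h0 r by (intro exI[of _ "(h0, r)"]) auto
    next
      case False then show ?thesis by blast
    qed
  qed
  from choice[OF ex] obtain hr where hr: "\<forall>\<theta>. \<theta> \<in> {0..1} \<longrightarrow> fst (hr \<theta>) > 0 \<and> snd (hr \<theta>) > 0 \<and>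
     (\<forall>h. 0 < h \<longrightarrow> h < fst (hr \<theta>) \<longrightarrow> induced_norm N (mat 1 + h *\<^sub>R M \<theta>) \<le> 1 + h * (m + \<epsilon>/2)) \<and>
     (\<forall>\<theta>'\<in>{0..1}. dist \<theta>' \<theta> < snd (hr \<theta>) \<longrightarrow> dist (M \<theta>') (M \<theta>) < \<epsilon> / (2 * KK))" by blast
  define \<rho> where "\<rho> \<theta> = (if \<theta> \<in> {0..1} then snd (hr \<theta>) else 1)" for \<theta>
  have \<rho>pos: "\<rho> \<theta> > 0" for \<theta> unfolding \<rho>_def using hr by auto
  have "gauge (\<lambda>\<theta>. ball \<theta> (\<rho> \<theta>))" using \<rho>pos by (intro gauge_ball_dependent) auto
  then obtain p where p: "p tagged_division_of {0..1::real}" "(\<lambda>\<theta>. ball \<theta> (\<rho> \<theta>)) fine p"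
    using fine_division_exists_real by blast
  have pfin: "finite p" using p(1) by blast
  have cover: "\<Union>{K. \<exists>x. (x, K) \<in> p} = {0..1}" using p(1) by blast
  have tagin: "x \<in> {0..1}" if "(x, K) \<in> p" for x K
    using p(1) that by blast
  define \<eta>0 where "\<eta>0 = Min ((\<lambda>(x, K). fst (hr x)) ` p)"
  have pne: "p \<noteq> {}" using cover by auto
  have \<eta>0pos: "\<eta>0 > 0" unfolding \<eta>0_def using pfin pne tagin hr by (subst Min_gr_iff) auto
  have \<eta>0le: "\<eta>0 \<le> fst (hr x)" if "(x, K) \<in> p" for x K
    unfolding \<eta>0_def using pfin that by (intro Min_le) force+
  have "induced_norm N (mat 1 + \<eta> *\<^sub>R M \<theta>) \<le> 1 + \<eta> * (m + \<epsilon>)"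
    if \<eta>: "0 < \<eta>" "\<eta> < \<eta>0" and \<theta>: "\<theta> \<in> {0..1}" for \<eta> \<theta>
  proof -
    obtain x K where xK: "(x, K) \<in> p" "\<theta> \<in> K" using cover \<theta> by blast
    have x01: "x \<in> {0..1}" using tagin[OF xK(1)] .
    have "K \<subseteq> ball x (\<rho> x)" using p(2) xK(1) unfolding fine_def by blast
    then have "dist \<theta> x < snd (hr x)" using xK(2) x01 unfolding \<rho>_def by (auto simp: dist_commute)
    then have dM: "dist (M \<theta>) (M x) < \<epsilon> / (2 * KK)" using hr x01 \<theta> by blast
    have "\<eta> < fst (hr x)" using \<eta>0le[OF xK(1)] \<eta> by linarith
    then have b1: "induced_norm N (mat 1 + \<eta> *\<^sub>R M x) \<le> 1 + \<eta> * (m + \<epsilon>/2)" using hr x01 \<eta> by blast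
    have "mat 1 + \<eta> *\<^sub>R M \<theta> = (mat 1 + \<eta> *\<^sub>R M x) + \<eta> *\<^sub>R (M \<theta> - M x)" by (simp add: algebra_simps)
    then have "induced_norm N (mat 1 + \<eta> *\<^sub>R M \<theta>) \<le> induced_norm N (mat 1 + \<eta> *\<^sub>R M x) + induced_norm N (\<eta> *\<^sub>R (M \<theta> - M x))"
      using ind_add[OF N] by metis
    also have "induced_norm N (\<eta> *\<^sub>R (M \<theta> - M x)) \<le> \<eta> * induced_norm N (M \<theta> - M x)"
      using ind_scale[OF N, of \<eta> "M \<theta> - M x"] \<eta> by simp
    also have "induced_norm N (M \<theta> - M x) \<le> KK * norm (M \<theta> - M x)" by (rule KK(2))
    also have "KK * norm (M \<theta> - M x) \<le> \<epsilon> / 2" using dM KK(1) by (simp add: dist_norm field_simps)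
    finally have "induced_norm N (mat 1 + \<eta> *\<^sub>R M \<theta>) \<le> induced_norm N (mat 1 + \<eta> *\<^sub>R M x) + \<eta> * (\<epsilon> / 2)"
      using \<eta> by (simp add: mult_left_mono)
    then show ?thesis using b1 by (simp add: algebra_simps)
  qed
  then show ?thesis using \<eta>0pos by blast
qed

end

context
  fixes N :: "real^'n \<Rightarrow> real"
  assumes N: "is_norm N"
begin

lemma nonlinear_contr:
  fixes F :: "real^'n \<Rightarrow> real^'n" and DF :: "real^'n \<Rightarrow> real^'n^'n"
  assumes deriv: "\<And>y. (F has_derivative (\<lambda>h. DF y *v h)) (at y)"
    and cont: "continuous_on UNIV DF"
    and ln: "\<And>y. log_norm N (DF y) \<le> - c"
    and e: "\<epsilon> > 0"
  shows "\<exists>\<eta>0>0. \<forall>\<eta>. 0 < \<eta> \<longrightarrow> \<eta> < \<eta>0 \<longrightarrow>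
           N ((y1 - y2) + \<eta> *\<^sub>R (F y1 - F y2)) \<le> (1 + \<eta> * (- c + \<epsilon>)) * N (y1 - y2)"
proof -
  define d where "d = y1 - y2"
  define P where "P \<theta> = y2 + \<theta> *\<^sub>R d" for \<theta> :: real
  define M where "M \<theta> = DF (P \<theta>)" for \<theta>
  have contP: "continuous_on {0..1} P" unfolding P_def by (intro continuous_intros)
  have contM: "continuous_on {0..1} M" unfolding M_def
    by (rule continuous_on_compose2[OF cont contP]) auto
  obtain \<eta>0 where \<eta>0: "\<eta>0 > 0" "\<And>\<eta> \<theta>. 0 < \<eta> \<Longrightarrow> \<eta> < \<eta>0 \<Longrightarrow> \<theta> \<in> {0..1} \<Longrightarrow>
      induced_norm N (mat 1 + \<eta> *\<^sub>R M \<theta>) \<le> 1 + \<eta> * (- c + \<epsilon>)"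
    using uniform_lognorm[OF N contM _ e, of "- c"] ln unfolding M_def by blast
  obtain Cn where Cn: "Cn > 0" "\<And>x. N x \<le> Cn * norm x" using is_norm_upper[OF N] by blast
  have "N (d + \<eta> *\<^sub>R (F y1 - F y2)) \<le> (1 + \<eta> * (- c + \<epsilon>)) * N d" if \<eta>: "0 < \<eta>" "\<eta> < \<eta>0" for \<eta>
  proof -
    define a where "a = (1 + \<eta> * (- c + \<epsilon>)) * N d"
    define u where "u \<theta> = \<theta> *\<^sub>R d + \<eta> *\<^sub>R (F (P \<theta>) - F y2)" for \<theta>
    define \<psi> where "\<psi> \<theta> = N (u \<theta>) - \<theta> * a" for \<theta>
    have P0: "P 0 = y2" and P1: "P 1 = y1" unfolding P_def d_def by auto
    have psi0: "\<psi> 0 = 0" unfolding \<psi>_def u_def P0 by (simp add: is_norm_zero[OF N])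
    have psi1: "\<psi> 1 = N (d + \<eta> *\<^sub>R (F y1 - F y2)) - a" unfolding \<psi>_def u_def P1 by simp
    have "\<psi> 1 \<le> \<psi> 0"
    proof (rule field_le_epsilon)
      fix \<delta> :: real assume \<delta>: "\<delta> > 0"
      define \<epsilon>' where "\<epsilon>' = \<delta> / (\<eta> * Cn * (norm d + 1))"
      have \<epsilon>': "\<epsilon>' > 0" unfolding \<epsilon>'_def using \<delta> \<eta> Cn by (simp add: add_nonneg_pos)
      have ex: "\<forall>s. \<exists>r>0. \<forall>y. norm (y - P s) < r \<longrightarrow> norm (F y - F (P s) - DF (P s) *v (y - P s)) \<le> \<epsilon>' * norm (y - P s)"
        using deriv \<epsilon>' unfolding has_derivative_at_alt by blast
      from choice[OF ex] obtain r where r: "\<And>s. r s > 0"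
        "\<And>s y. norm (y - P s) < r s \<Longrightarrow> norm (F y - F (P s) - DF (P s) *v (y - P s)) \<le> \<epsilon>' * norm (y - P s)"
        by blast
      have "\<forall>s. 0 < r s / (norm d + 1)" using r(1) by (simp add: add_nonneg_pos)
      then have "gauge (\<lambda>s. ball s (r s / (norm d + 1)))" by (rule gauge_ball_dependent)
      then obtain p where p: "p tagged_division_of {0..1::real}" "(\<lambda>s. ball s (r s / (norm d + 1))) fine p"
        using fine_division_exists_real by blast
      have rem: "N (F (P \<theta>) - F (P x) - M x *v (P \<theta> - P x)) \<le> Cn * \<epsilon>' * norm d * \<bar>\<theta> - x\<bar>"
        if "\<bar>\<theta> - x\<bar> < r x / (norm d + 1)" for \<theta> x
      proof -
        have Pd: "P \<theta> - P x = (\<theta> - x) *\<^sub>R d" unfolding P_def by (simp add: algebra_simps)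
        have "norm (P \<theta> - P x) = \<bar>\<theta> - x\<bar> * norm d" unfolding Pd by simp
        also have "\<dots> \<le> \<bar>\<theta> - x\<bar> * (norm d + 1)" by (simp add: mult_left_mono)
        also have "\<dots> < r x"
        proof -
          have np: "norm d + 1 > 0" by (simp add: add_nonneg_pos)
          from that have "\<bar>\<theta> - x\<bar> * (norm d + 1) < r x / (norm d + 1) * (norm d + 1)"
            using np by (intro mult_strict_right_mono) auto
          then show ?thesis using np by simp
        qed
        finally have "norm (P \<theta> - P x) < r x" .
        then have "norm (F (P \<theta>) - F (P x) - M x *v (P \<theta> - P x)) \<le> \<epsilon>' * norm (P \<theta> - P x)"
          using r(2) unfolding M_def by blast
        then have "N (F (P \<theta>) - F (P x) - M x *v (P \<theta> - P x)) \<le> Cn * (\<epsilon>' * norm (P \<theta> - P x))"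
          using Cn by (meson mult_left_mono less_imp_le order_trans)
        also have "\<dots> = Cn * \<epsilon>' * norm d * \<bar>\<theta> - x\<bar>" unfolding Pd norm_scaleR by (simp only: ac_simps)
        finally show ?thesis .
      qed
      have per: "\<psi> (Sup K) - \<psi> (Inf K) \<le> \<delta> * measure lborel K" if xK: "(x, K) \<in> p" for x K
      proof -
        obtain \<alpha> \<beta> where K: "K = cbox \<alpha> \<beta>" using p(1) xK by blast
        have xin: "x \<in> K" using p(1) xK by blast
        have Ksub: "K \<subseteq> {0..1}" using p(1) xK by blast
        have ab: "\<alpha> \<le> \<beta>" "\<alpha> \<le> x" "x \<le> \<beta>" using xin K by auto
        have K': "K = {\<alpha>..\<beta>}" using K by simp
        have x01: "x \<in> {0..1}" using Ksub xin by auto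
        have infsup: "Inf K = \<alpha>" "Sup K = \<beta>" using K' ab by auto
        have cont: "measure lborel K = \<beta> - \<alpha>" using K' ab by simp
        have Kb: "K \<subseteq> ball x (r x / (norm d + 1))" using p(2) xK unfolding fine_def by blast
        moreover have "\<alpha> \<in> K" "\<beta> \<in> K" using K' ab by auto
        ultimately have "dist x \<alpha> < r x / (norm d + 1)" "dist x \<beta> < r x / (norm d + 1)" by auto
        then have da: "\<bar>\<alpha> - x\<bar> < r x / (norm d + 1)" and db: "\<bar>\<beta> - x\<bar> < r x / (norm d + 1)"
          by (auto simp: dist_real_def abs_minus_commute)
        define r\<alpha> where "r\<alpha> = F (P \<alpha>) - F (P x) - M x *v (P \<alpha> - P x)"
        define r\<beta> where "r\<beta> = F (P \<beta>) - F (P x) - M x *v (P \<beta> - P x)"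
        have Pba: "P \<beta> - P \<alpha> = (\<beta> - \<alpha>) *\<^sub>R d" unfolding P_def by (simp add: algebra_simps)
        have "F (P \<beta>) - F (P \<alpha>) = r\<beta> - r\<alpha> + M x *v (P \<beta> - P \<alpha>)"
          unfolding r\<alpha>_def r\<beta>_def by (simp add: matrix_vector_mult_diff_distrib algebra_simps)
        also have "M x *v (P \<beta> - P \<alpha>) = (\<beta> - \<alpha>) *\<^sub>R (M x *v d)"
          unfolding Pba by (simp add: matrix_vector_mult_scaleR)
        finally have Fd: "F (P \<beta>) - F (P \<alpha>) = r\<beta> - r\<alpha> + (\<beta> - \<alpha>) *\<^sub>R (M x *v d)" .
        have ud: "u \<beta> - u \<alpha> = (\<beta> - \<alpha>) *\<^sub>R ((mat 1 + \<eta> *\<^sub>R M x) *v d) + \<eta> *\<^sub>R (r\<beta> - r\<alpha>)"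
        proof -
          have "u \<beta> - u \<alpha> = (\<beta> - \<alpha>) *\<^sub>R d + \<eta> *\<^sub>R (F (P \<beta>) - F (P \<alpha>))"
            unfolding u_def by (simp add: algebra_simps)
          also have "\<dots> = (\<beta> - \<alpha>) *\<^sub>R d + \<eta> *\<^sub>R (r\<beta> - r\<alpha>) + (\<beta> - \<alpha>) *\<^sub>R (\<eta> *\<^sub>R (M x *v d))"
            unfolding Fd by (simp add: algebra_simps)
          also have "\<dots> = (\<beta> - \<alpha>) *\<^sub>R ((mat 1 + \<eta> *\<^sub>R M x) *v d) + \<eta> *\<^sub>R (r\<beta> - r\<alpha>)"
            by (simp add: matrix_vector_mult_add_rdistrib scaleR_matrix_vector_assoc[symmetric] algebra_simps)
          finally show ?thesis .
        qed
        have n1: "N ((mat 1 + \<eta> *\<^sub>R M x) *v d) \<le> a"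
        proof -
          have "N ((mat 1 + \<eta> *\<^sub>R M x) *v d) \<le> induced_norm N (mat 1 + \<eta> *\<^sub>R M x) * N d" by (rule ind_ge[OF N])
          also have "\<dots> \<le> (1 + \<eta> * (- c + \<epsilon>)) * N d"
            using \<eta>0(2)[OF \<eta> x01] is_normD(1)[OF N] by (intro mult_right_mono) auto
          finally show ?thesis unfolding a_def .
        qed
        have "N (u \<beta> - u \<alpha>) \<le> N ((\<beta> - \<alpha>) *\<^sub>R ((mat 1 + \<eta> *\<^sub>R M x) *v d)) + N (\<eta> *\<^sub>R (r\<beta> - r\<alpha>))"
          unfolding ud by (rule is_normD(4)[OF N])
        also have "\<dots> = (\<beta> - \<alpha>) * N ((mat 1 + \<eta> *\<^sub>R M x) *v d) + \<eta> * N (r\<beta> - r\<alpha>)"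
          using ab \<eta> by (simp add: is_normD(3)[OF N])
        also have "\<dots> \<le> (\<beta> - \<alpha>) * a + \<eta> * (N r\<beta> + N r\<alpha>)"
          using n1 ab \<eta> is_norm_diff[OF N, of r\<beta> r\<alpha>] by (intro add_mono mult_left_mono) auto
        also have "N r\<beta> + N r\<alpha> \<le> Cn * \<epsilon>' * norm d * \<bar>\<beta> - x\<bar> + Cn * \<epsilon>' * norm d * \<bar>\<alpha> - x\<bar>"
          unfolding r\<alpha>_def r\<beta>_def using rem[OF db] rem[OF da] by (intro add_mono)
        also have "\<dots> = Cn * \<epsilon>' * norm d * (\<beta> - \<alpha>)" using ab by (simp add: algebra_simps)
        finally have nu: "N (u \<beta> - u \<alpha>) \<le> (\<beta> - \<alpha>) * a + \<eta> * (Cn * \<epsilon>' * norm d * (\<beta> - \<alpha>))"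
          using \<eta> by (simp add: mult_left_mono)
        have np0: "norm d + 1 > 0" using norm_ge_zero[of d] by linarith
        have D0: "\<eta> * Cn * (norm d + 1) > 0" using \<eta> Cn np0 by simp
        have eqd: "\<eta> * Cn * \<epsilon>' * (norm d + 1) = \<delta>"
          unfolding \<epsilon>'_def using \<eta> Cn np0 by (simp add: mult.assoc)
        have "\<eta> * Cn * \<epsilon>' * norm d \<le> \<eta> * Cn * \<epsilon>' * (norm d + 1)"
          using \<eta> Cn \<epsilon>' by (intro mult_left_mono) auto
        then have "\<eta> * Cn * \<epsilon>' * norm d \<le> \<delta>" using eqd by simp
        then have "(\<eta> * Cn * \<epsilon>' * norm d) * (\<beta> - \<alpha>) \<le> \<delta> * (\<beta> - \<alpha>)"
          using ab by (intro mult_right_mono) auto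
        then have sm: "\<eta> * (Cn * \<epsilon>' * norm d * (\<beta> - \<alpha>)) \<le> \<delta> * (\<beta> - \<alpha>)" by (simp add: ac_simps)
        have "\<psi> \<beta> - \<psi> \<alpha> \<le> N (u \<beta> - u \<alpha>) - (\<beta> - \<alpha>) * a"
          unfolding \<psi>_def using is_norm_rev_tri[OF N, of "u \<beta>" "u \<alpha>"] by (simp add: algebra_simps)
        then show ?thesis unfolding infsup cont using nu sm by linarith
      qed
      have "\<psi> 1 - \<psi> 0 = (\<Sum>(x,K)\<in>p. \<psi> (Sup K) - \<psi> (Inf K))"
        using additive_tagged_division_1[OF _ p(1), of \<psi>] by simp
      also have "\<dots> \<le> (\<Sum>(x,K)\<in>p. \<delta> * measure lborel K)"
        using per by (intro sum_mono) auto
      also have "\<dots> = \<delta> * (\<Sum>(x,K)\<in>p. measure lborel K)"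
        by (simp add: split_def sum_distrib_left)
      also have "(\<Sum>(x,K)\<in>p. measure lborel K) = 1"
        using additive_content_tagged_division[of p 0 1] p(1) by simp
      finally show "\<psi> 1 \<le> \<psi> 0 + \<delta>" by simp
    qed
    then show ?thesis using psi0 psi1 unfolding a_def by simp
  qed
  then show ?thesis using \<eta>0(1) unfolding d_def by blast
qed

end

lemma transpose_add_mat: "transpose (A + B) = transpose A + transpose (B :: real^'n^'m)"
  by (simp add: transpose_def vec_eq_iff)

lemma transpose_id_plus:
  fixes A :: "real^'n^'n"
  shows "transpose (mat 1 + \<eta> *\<^sub>R A) *v z = z + \<eta> *\<^sub>R (transpose A *v z)"
  by (simp only: transpose_add_mat transpose_mat transpose_scalar matrix_vector_mult_add_rdistrib
      matrix_vector_mul_lid scaleR_matrix_vector_assoc)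

lemma sign_sup:
  fixes a :: "real \<Rightarrow> real"
  assumes ne: "A \<noteq> {}" and bdd: "bdd_above (a ` A)"
    and a0: "\<And>s. s \<in> A \<Longrightarrow> 0 \<le> a s"
    and La: "\<And>s. s \<in> A \<Longrightarrow> 0 \<le> L * a s"
  shows "\<And>s. s \<in> A \<Longrightarrow> L * a s \<le> L * (SUP s\<in>A. a s)" "0 \<le> L * (SUP s\<in>A. a s)"
proof -
  have up: "a s \<le> (SUP s\<in>A. a s)" if "s \<in> A" for s by (rule cSUP_upper[OF that bdd])
  have S0: "0 \<le> (SUP s\<in>A. a s)" using ne a0 up by (meson all_not_in_conv order_trans)
  have "(\<forall>s\<in>A. L * a s \<le> L * (SUP s\<in>A. a s)) \<and> 0 \<le> L * (SUP s\<in>A. a s)"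
  proof (cases "L \<ge> 0")
    case True then show ?thesis using up S0 by (auto intro: mult_left_mono)
  next
    case False
    have z: "a s = 0" if "s \<in> A" for s
    proof -
      have "L * a s \<le> 0" using False a0[OF that] by (simp add: mult_nonpos_nonneg)
      then have "L * a s = 0" using La[OF that] by simp
      then show ?thesis using False by simp
    qed
    have "(SUP s\<in>A. a s) = (SUP s\<in>A. (0::real))" by (rule SUP_cong) (use z in auto)
    also have "\<dots> = 0" using ne by simp
    finally show ?thesis using z by simp
  qed
  then show "\<And>s. s \<in> A \<Longrightarrow> L * a s \<le> L * (SUP s\<in>A. a s)" "0 \<le> L * (SUP s\<in>A. a s)" by auto
qed

theorem corollary1:
  fixes T c lfu lfxx lfxu :: real
    and U :: "(real^'k) set" and V X \<Lambda> :: "(real^'n) set"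
    and f :: "real \<Rightarrow> real^'n \<Rightarrow> real^'k \<Rightarrow> real^'n"
    and Dx :: "real \<Rightarrow> real^'n \<Rightarrow> real^'k \<Rightarrow> real^'n^'n"
    and Du :: "real \<Rightarrow> real^'n \<Rightarrow> real^'k \<Rightarrow> real^'k^'n"
    and x0 :: "real^'n"
    and N :: "real^'n \<Rightarrow> real" and NU :: "real^'k \<Rightarrow> real"
    and u ub :: "real \<Rightarrow> real^'k"
    and v vb x xb lam lamb :: "real \<Rightarrow> real^'n"
  assumes T: "T > 0"
    and U: "bounded U" "0 \<in> U"
    and V: "bounded V"
    and f_cont: "continuous_on ({0..T} \<times> UNIV \<times> U) (\<lambda>(t, y, w). f t y w)"
    and Dx_deriv: "\<And>t y w. t \<in> {0..T} \<Longrightarrow> w \<in> U \<Longrightarrow>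
        ((\<lambda>z. f t z w) has_derivative (\<lambda>h. Dx t y w *v h)) (at y)"
    and Dx_cont: "continuous_on ({0..T} \<times> UNIV \<times> U) (\<lambda>(t, y, w). Dx t y w)"
    and Du_deriv: "\<And>t y w. t \<in> {0..T} \<Longrightarrow> w \<in> U \<Longrightarrow>
        ((\<lambda>z. f t y z) has_derivative (\<lambda>h. Du t y w *v h)) (at w within U)"
    and Du_cont: "continuous_on ({0..T} \<times> UNIV \<times> U) (\<lambda>(t, y, w). Du t y w)"
    and N: "is_norm N" and NU: "is_norm NU"
    and c: "c > 0"
    and A1_osl: "\<And>t w. t \<in> {0..T} \<Longrightarrow> w \<in> U \<Longrightarrow>
        osl_const N (\<lambda>y. Dx t y w) \<le> ereal (- c)"
    and A1_bdd: "\<And>z. state_sol T f x0 (\<lambda>_. 0) z \<Longrightarrow> bounded (z ` {0..T})"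
    and A2: "\<And>t y w1 w2. t \<in> {0..T} \<Longrightarrow> w1 \<in> U \<Longrightarrow> w2 \<in> U \<Longrightarrow>
        N (f t y w1 - f t y w2) \<le> lfu * NU (w1 - w2)"
    and X: "bounded X" and Lam: "bounded \<Lambda>"
    and A3x: "\<And>t w l y1 y2. t \<in> {0..T} \<Longrightarrow> w \<in> U \<Longrightarrow> l \<in> \<Lambda> \<Longrightarrow>
        dual_norm N (transpose (Dx t y1 w) *v l - transpose (Dx t y2 w) *v l) \<le> lfxx * N (y1 - y2)"
    and A3u: "\<And>t y l w1 w2. t \<in> {0..T} \<Longrightarrow> y \<in> X \<Longrightarrow> l \<in> \<Lambda> \<Longrightarrow> w1 \<in> U \<Longrightarrow> w2 \<in> U \<Longrightarrow>
        dual_norm N (transpose (Dx t y w1) *v l - transpose (Dx t y w2) *v l) \<le> lfxu * NU (w1 - w2)"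
    and u_meas: "u measurable_on {0..T}" and ub_meas: "ub measurable_on {0..T}"
    and v_meas: "v measurable_on {0..T}" and vb_meas: "vb measurable_on {0..T}"
    and u_in: "\<And>t. t \<in> {0..T} \<Longrightarrow> u t \<in> U" and ub_in: "\<And>t. t \<in> {0..T} \<Longrightarrow> ub t \<in> U"
    and v_in: "\<And>t. t \<in> {0..T} \<Longrightarrow> v t \<in> V" and vb_in: "\<And>t. t \<in> {0..T} \<Longrightarrow> vb t \<in> V"
    and x_sol: "state_sol T f x0 u x" and xb_sol: "state_sol T f x0 ub xb"
    and lam_sol: "adjoint_sol T Dx x u v lam" and lamb_sol: "adjoint_sol T Dx xb ub vb lamb"
    and x_in: "\<And>t. t \<in> {0..T} \<Longrightarrow> x t \<in> X \<and> xb t \<in> X"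
    and lam_in: "\<And>t. t \<in> {0..T} \<Longrightarrow> lam t \<in> \<Lambda> \<and> lamb t \<in> \<Lambda>"
  shows "(let \<kappa> = (1 - exp (- c * T)) / c in
     (SUP t\<in>{0..T}. dual_norm N (lam t - lamb t))
       \<le> dual_norm N (lam T - lamb T)
         + \<kappa> * (SUP t\<in>{0..T}. dual_norm N (v t - vb t))
         + (lfxu * \<kappa> + lfxx * lfu * \<kappa>\<^sup>2) * (SUP t\<in>{0..T}. NU (u t - ub t)))"
proof -
  define D where "D = dual_norm N"
  define Su where "Su = (SUP t\<in>{0..T}. NU (u t - ub t))"
  define Sv where "Sv = (SUP t\<in>{0..T}. dual_norm N (v t - vb t))"
  define \<kappa> where "\<kappa> = (1 - exp (- c * T)) / c"
  have ne: "{0..T} \<noteq> {}" using T by simp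
  have T0: "0 \<in> {0..T}" "T \<in> {0..T}" using T by auto
  obtain CN where CN: "CN > 0" "\<And>z. N z \<le> CN * norm z" using is_norm_upper[OF N] by blast
  obtain CU where CU: "CU > 0" "\<And>z. NU z \<le> CU * norm z" using is_norm_upper[OF NU] by blast
  obtain CD where CD: "CD > 0" "\<And>z. dual_norm N z \<le> CD * norm z" using dual_upper_const[OF N] by blast
  obtain BU where BU: "\<And>w. w \<in> U \<Longrightarrow> norm w \<le> BU" using U(1) unfolding bounded_iff by blast
  obtain BV where BV: "\<And>w. w \<in> V \<Longrightarrow> norm w \<le> BV" using V unfolding bounded_iff by blast
  have NUnn: "0 \<le> NU z" for z using is_normD(1)[OF NU] .
  have Nnn: "0 \<le> N z" for z using is_normD(1)[OF N] .
  have Dnn: "0 \<le> dual_norm N z" for z using dual_nonneg[OF N] .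
  have bddU: "bdd_above ((\<lambda>t. NU (u t - ub t)) ` {0..T})"
  proof (rule bdd_aboveI2)
    fix t assume t: "t \<in> {0..T}"
    have "NU (u t - ub t) \<le> CU * norm (u t - ub t)" by (rule CU(2))
    also have "\<dots> \<le> CU * (BU + BU)"
      using BU[OF u_in[OF t]] BU[OF ub_in[OF t]] norm_triangle_ineq4[of "u t" "ub t"] CU(1)
      by (intro mult_left_mono) auto
    finally show "NU (u t - ub t) \<le> CU * (BU + BU)" .
  qed
  have bddV: "bdd_above ((\<lambda>t. dual_norm N (v t - vb t)) ` {0..T})"
  proof (rule bdd_aboveI2)
    fix t assume t: "t \<in> {0..T}"
    have "dual_norm N (v t - vb t) \<le> CD * norm (v t - vb t)" by (rule CD(2))
    also have "\<dots> \<le> CD * (BV + BV)"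
      using BV[OF v_in[OF t]] BV[OF vb_in[OF t]] norm_triangle_ineq4[of "v t" "vb t"] CD(1)
      by (intro mult_left_mono) auto
    finally show "dual_norm N (v t - vb t) \<le> CD * (BV + BV)" .
  qed
  have Su_ge: "NU (u t - ub t) \<le> Su" if "t \<in> {0..T}" for t
    unfolding Su_def by (rule cSUP_upper[OF that bddU])
  have Sv_ge: "dual_norm N (v t - vb t) \<le> Sv" if "t \<in> {0..T}" for t
    unfolding Sv_def by (rule cSUP_upper[OF that bddV])
  have Sv0: "0 \<le> Sv" using Sv_ge[OF T0(1)] Dnn order_trans by blast
  have \<kappa>0: "0 \<le> \<kappa>" unfolding \<kappa>_def using c T by (simp add: divide_nonneg_pos)
  have lfu_nn: "0 \<le> lfu * NU (u s - ub s)" if "s \<in> {0..T}" for s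
    using A2[OF that u_in[OF that] ub_in[OF that], of "xb s"] Nnn order_trans by blast
  have lfu_sup: "lfu * NU (u s - ub s) \<le> lfu * Su" if "s \<in> {0..T}" for s
    unfolding Su_def by (rule sign_sup(1)[OF ne bddU NUnn lfu_nn that])
  have lfuSu0: "0 \<le> lfu * Su" unfolding Su_def by (rule sign_sup(2)[OF ne bddU NUnn lfu_nn])
  have lfxu_nn: "0 \<le> lfxu * NU (u s - ub s)" if "s \<in> {0..T}" for s
    using A3u[OF that conjunct2[OF x_in[OF that]] conjunct2[OF lam_in[OF that]] u_in[OF that] ub_in[OF that]]
      Dnn order_trans by blast
  have lfxu_sup: "lfxu * NU (u s - ub s) \<le> lfxu * Su" if "s \<in> {0..T}" for s
    unfolding Su_def by (rule sign_sup(1)[OF ne bddU NUnn lfxu_nn that])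
  have lfxuSu0: "0 \<le> lfxu * Su" unfolding Su_def by (rule sign_sup(2)[OF ne bddU NUnn lfxu_nn])
  have lfxx0: "0 \<le> lfxx"
  proof -
    obtain y :: "real^'n" where y: "N y = 1" using exists_norm_one[OF N] by blast
    have "0 \<le> lfxx * N (y - 0)"
      using A3x[OF T0(1) u_in[OF T0(1)] conjunct1[OF lam_in[OF T0(1)]], of y 0] Dnn order_trans by blast
    then show ?thesis using y by simp
  qed
  have lnb: "log_norm N (Dx t y w) \<le> - c" if "t \<in> {0..T}" "w \<in> U" for t y w
    using A1_osl[OF that] unfolding osl_const_def by (simp add: SUP_le_iff)
  have Dxc: "continuous_on UNIV (\<lambda>y. Dx t y w)" if "t \<in> {0..T}" "w \<in> U" for t w
  proof -
    have "continuous_on UNIV (\<lambda>y. (t, y, w))" by (intro continuous_intros)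
    moreover have "(\<lambda>y. (t, y, w)) ` UNIV \<subseteq> {0..T} \<times> UNIV \<times> U" using that by auto
    ultimately have "continuous_on UNIV ((\<lambda>(t, y, w). Dx t y w) \<circ> (\<lambda>y. (t, y, w)))"
      by (intro continuous_on_compose continuous_on_subset[OF Dx_cont])
    then show ?thesis by (simp add: o_def)
  qed
  define Rx where "Rx = lfu * Su"
  have x0: "x 0 = x0" and xb0: "xb 0 = x0"
  proof -
    have "((\<lambda>s. f s (x s) (u s)) has_integral (x 0 - x0)) {0..0}" using x_sol T0(1) unfolding state_sol_def by blast
    moreover have "((\<lambda>s. f s (x s) (u s)) has_integral 0) {0..0}" unfolding atLeastAtMost_singleton by (rule has_integral_refl(2))
    ultimately have "x 0 - x0 = 0" by (rule has_integral_unique)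
    then show "x 0 = x0" by simp
    have "((\<lambda>s. f s (xb s) (ub s)) has_integral (xb 0 - x0)) {0..0}" using xb_sol T0(1) unfolding state_sol_def by blast
    moreover have "((\<lambda>s. f s (xb s) (ub s)) has_integral 0) {0..0}" unfolding atLeastAtMost_singleton by (rule has_integral_refl(2))
    ultimately have "xb 0 - x0 = 0" by (rule has_integral_unique)
    then show "xb 0 = x0" by simp
  qed
  have xest: "N (x t - xb t) \<le> Rx * \<kappa>" if t: "t \<in> {0..T}" for t
  proof -
    define ex where "ex s = x s - xb s" for s
    define gx where "gx s = f s (x s) (u s) - f s (xb s) (ub s)" for s
    define qx where "qx s = f s (x s) (u s) - f s (xb s) (u s)" for s
    have intx: "(gx has_integral (ex t' - ex 0)) {0..t'}" if "t' \<in> {0..T}" for t'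
    proof -
      have "((\<lambda>s. f s (x s) (u s)) has_integral (x t' - x0)) {0..t'}" using x_sol that unfolding state_sol_def by blast
      moreover have "((\<lambda>s. f s (xb s) (ub s)) has_integral (xb t' - x0)) {0..t'}" using xb_sol that unfolding state_sol_def by blast
      ultimately have "(gx has_integral ((x t' - x0) - (xb t' - x0))) {0..t'}" unfolding gx_def by (rule has_integral_diff)
      then show ?thesis unfolding ex_def x0 xb0 by simp
    qed
    have gqx: "N (gx s - qx s) \<le> Rx" if "s \<in> {0..T}" for s
    proof -
      have "N (gx s - qx s) = N (f s (xb s) (u s) - f s (xb s) (ub s))" unfolding gx_def qx_def by (simp add: algebra_simps)
      also have "\<dots> \<le> lfu * NU (u s - ub s)" by (rule A2[OF that u_in[OF that] ub_in[OF that]])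
      also have "\<dots> \<le> Rx" unfolding Rx_def by (rule lfu_sup[OF that])
      finally show ?thesis .
    qed
    have contrx: "\<exists>\<eta>0>0. \<forall>\<eta>. 0 < \<eta> \<longrightarrow> \<eta> < \<eta>0 \<longrightarrow> N (ex s + \<eta> *\<^sub>R qx s) \<le> (1 + \<eta> * (- c + \<epsilon>)) * N (ex s)"
      if s: "s \<in> {0..T}" and \<epsilon>: "\<epsilon> > 0" for s \<epsilon>
      unfolding ex_def qx_def
      by (rule nonlinear_contr[OF N Dx_deriv[OF s u_in[OF s]] Dxc[OF s u_in[OF s]] lnb[OF s u_in[OF s]] \<epsilon>])
    have "N (ex t) \<le> exp (- c * t) * N (ex 0) + Rx * (1 - exp (- c * t)) / c"
      by (rule contraction_integral[OF is_normD(1)[OF N] is_normD(3)[OF N] is_normD(4)[OF N] CN(2) c lfuSu0[folded Rx_def] intx gqx contrx t])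
    also have "N (ex 0) = 0" unfolding ex_def x0 xb0 by (simp add: is_norm_zero[OF N])
    also have "exp (- c * t) * 0 + Rx * (1 - exp (- c * t)) / c = Rx * ((1 - exp (- c * t)) / c)" by simp
    also have "\<dots> \<le> Rx * \<kappa>"
    proof (rule mult_left_mono)
      have "exp (- c * T) \<le> exp (- c * t)" using t c by (simp add: mult_left_mono)
      then show "(1 - exp (- c * t)) / c \<le> \<kappa>" unfolding \<kappa>_def using c by (simp add: divide_right_mono)
      show "0 \<le> Rx" unfolding Rx_def by (rule lfuSu0)
    qed
    finally show ?thesis unfolding ex_def .
  qed
  define A where "A s = Dx s (x s) (u s)" for s
  define gl where "gl s = - (transpose (Dx s (x s) (u s)) *v lam s) - v s" for s
  define glb where "glb s = - (transpose (Dx s (xb s) (ub s)) *v lamb s) - vb s" for s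
  define el where "el \<tau> = lam (T - \<tau>) - lamb (T - \<tau>)" for \<tau>
  define gt where "gt \<tau> = - (gl (T - \<tau>) - glb (T - \<tau>))" for \<tau>
  define qt where "qt \<tau> = transpose (A (T - \<tau>)) *v el \<tau>" for \<tau>
  define Rl where "Rl = lfxx * (Rx * \<kappa>) + lfxu * Su + Sv"
  have Rl0: "0 \<le> Rl" unfolding Rl_def
    using lfxx0 lfuSu0 \<kappa>0 lfxuSu0 Sv0 unfolding Rx_def by (simp add: add_nonneg_nonneg)
  have intl: "(gt has_integral (el \<tau> - el 0)) {0..\<tau>}" if \<tau>: "\<tau> \<in> {0..T}" for \<tau>
  proof -
    have int0: "((\<lambda>s. gl s - glb s) has_integral ((lam t - lamb t) - (lam 0 - lamb 0))) {0..t}" if "t \<in> {0..T}" for t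
    proof -
      have "(gl has_integral (lam t - lam 0)) {0..t}" using lam_sol that unfolding adjoint_sol_def gl_def by blast
      moreover have "(glb has_integral (lamb t - lamb 0)) {0..t}" using lamb_sol that unfolding adjoint_sol_def glb_def by blast
      ultimately have "((\<lambda>s. gl s - glb s) has_integral ((lam t - lam 0) - (lamb t - lamb 0))) {0..t}"
        by (rule has_integral_diff)
      moreover have "(lam t - lam 0) - (lamb t - lamb 0) = (lam t - lamb t) - (lam 0 - lamb 0)"
        by (simp add: algebra_simps)
      ultimately show ?thesis by simp
    qed
    have "((\<lambda>\<sigma>. - (gl (T - \<sigma>) - glb (T - \<sigma>))) has_integral
        ((lam (T - \<tau>) - lamb (T - \<tau>)) - (lam T - lamb T))) {0..\<tau>}"
      by (rule reverse_integral[of T "\<lambda>s. gl s - glb s" "\<lambda>s. lam s - lamb s", OF int0 \<tau>])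
    then show ?thesis unfolding gt_def el_def by simp
  qed
  have gql: "dual_norm N (gt \<tau> - qt \<tau>) \<le> Rl" if \<tau>: "\<tau> \<in> {0..T}" for \<tau>
  proof -
    define s where "s = T - \<tau>"
    have s: "s \<in> {0..T}" using \<tau> unfolding s_def by auto
    define B where "B = Dx s (xb s) (u s)"
    have eq: "gt \<tau> - qt \<tau> = (transpose (A s) *v lamb s - transpose B *v lamb s)
        + (transpose B *v lamb s - transpose (Dx s (xb s) (ub s)) *v lamb s) + (v s - vb s)"
      unfolding gt_def qt_def el_def gl_def glb_def s_def[symmetric] A_def B_def
      by (simp add: matrix_vector_mult_diff_distrib algebra_simps)
    have "dual_norm N (gt \<tau> - qt \<tau>) \<le> dual_norm N (transpose (A s) *v lamb s - transpose B *v lamb s)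
        + dual_norm N (transpose B *v lamb s - transpose (Dx s (xb s) (ub s)) *v lamb s) + dual_norm N (v s - vb s)"
      unfolding eq using dual_add[OF N] by (meson add_mono order_refl order_trans)
    also have "dual_norm N (transpose (A s) *v lamb s - transpose B *v lamb s) \<le> lfxx * N (x s - xb s)"
      unfolding A_def B_def by (rule A3x[OF s u_in[OF s] conjunct2[OF lam_in[OF s]]])
    also have "dual_norm N (transpose B *v lamb s - transpose (Dx s (xb s) (ub s)) *v lamb s) \<le> lfxu * NU (u s - ub s)"
      unfolding B_def by (rule A3u[OF s conjunct2[OF x_in[OF s]] conjunct2[OF lam_in[OF s]] u_in[OF s] ub_in[OF s]])
    also have "lfxu * NU (u s - ub s) \<le> lfxu * Su" by (rule lfxu_sup[OF s])
    also have "dual_norm N (v s - vb s) \<le> Sv" by (rule Sv_ge[OF s])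
    also have "lfxx * N (x s - xb s) \<le> lfxx * (Rx * \<kappa>)" using xest[OF s] lfxx0 by (rule mult_left_mono)
    finally show ?thesis unfolding Rl_def by simp
  qed
  have contrl: "\<exists>\<eta>0>0. \<forall>\<eta>. 0 < \<eta> \<longrightarrow> \<eta> < \<eta>0 \<longrightarrow> dual_norm N (el \<tau> + \<eta> *\<^sub>R qt \<tau>) \<le> (1 + \<eta> * (- c + \<epsilon>)) * dual_norm N (el \<tau>)"
    if \<tau>: "\<tau> \<in> {0..T}" and \<epsilon>: "\<epsilon> > 0" for \<tau> \<epsilon>
  proof -
    define s where "s = T - \<tau>"
    have s: "s \<in> {0..T}" using \<tau> unfolding s_def by auto
    obtain h0 where h0: "h0 > 0" "\<forall>h. 0 < h \<longrightarrow> h < h0 \<longrightarrow> induced_norm N (mat 1 + h *\<^sub>R A s) \<le> 1 + h * (- c + \<epsilon>)"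
      using lognorm_eventually[OF N lnb[OF s u_in[OF s]] \<epsilon>] unfolding A_def by blast
    have "dual_norm N (el \<tau> + \<eta> *\<^sub>R qt \<tau>) \<le> (1 + \<eta> * (- c + \<epsilon>)) * dual_norm N (el \<tau>)"
      if \<eta>: "0 < \<eta>" "\<eta> < h0" for \<eta>
    proof -
      have "el \<tau> + \<eta> *\<^sub>R qt \<tau> = transpose (mat 1 + \<eta> *\<^sub>R A s) *v el \<tau>"
        unfolding qt_def s_def[symmetric] by (rule transpose_id_plus[symmetric])
      then have "dual_norm N (el \<tau> + \<eta> *\<^sub>R qt \<tau>) \<le> induced_norm N (mat 1 + \<eta> *\<^sub>R A s) * dual_norm N (el \<tau>)"
        using dual_transpose[OF N] by metis
      also have "\<dots> \<le> (1 + \<eta> * (- c + \<epsilon>)) * dual_norm N (el \<tau>)"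
        using h0(2) \<eta> Dnn by (intro mult_right_mono) auto
      finally show ?thesis .
    qed
    then show ?thesis using h0(1) by blast
  qed
  have lest: "dual_norm N (lam t - lamb t) \<le> dual_norm N (lam T - lamb T) + Rl * \<kappa>" if t: "t \<in> {0..T}" for t
  proof -
    define \<tau> where "\<tau> = T - t"
    have \<tau>: "\<tau> \<in> {0..T}" using t unfolding \<tau>_def by auto
    have "dual_norm N (el \<tau>) \<le> exp (- c * \<tau>) * dual_norm N (el 0) + Rl * (1 - exp (- c * \<tau>)) / c"
      by (rule contraction_integral[OF dual_nonneg[OF N] dual_scale[OF N] dual_add[OF N] CD(2) c Rl0 intl gql contrl \<tau>])
    also have "exp (- c * \<tau>) * dual_norm N (el 0) \<le> dual_norm N (el 0)"
      using \<tau> c Dnn by (intro mult_left_le_one_le) auto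
    also have "Rl * (1 - exp (- c * \<tau>)) / c = Rl * ((1 - exp (- c * \<tau>)) / c)" by simp
    also have "\<dots> \<le> Rl * \<kappa>"
    proof (rule mult_left_mono)
      have "exp (- c * T) \<le> exp (- c * \<tau>)" using \<tau> c by (simp add: mult_left_mono)
      then show "(1 - exp (- c * \<tau>)) / c \<le> \<kappa>" unfolding \<kappa>_def using c by (simp add: divide_right_mono)
      show "0 \<le> Rl" by (rule Rl0)
    qed
    finally show ?thesis unfolding el_def \<tau>_def by simp
  qed
  have "(SUP t\<in>{0..T}. dual_norm N (lam t - lamb t)) \<le> dual_norm N (lam T - lamb T) + Rl * \<kappa>"
    by (rule cSUP_least[OF ne]) (rule lest)
  also have "Rl * \<kappa> = \<kappa> * Sv + (lfxu * \<kappa> + lfxx * lfu * \<kappa>\<^sup>2) * Su"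
    unfolding Rl_def Rx_def by (simp add: algebra_simps power2_eq_square)
  finally show ?thesis unfolding Let_def \<kappa>_def[symmetric] Su_def Sv_def by (simp add: add.assoc)
qed

end
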